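(* Let $D=[0,1]$. For a sequence $\boldsymbol{\tau}=(\tau_m)_{m\in\mathbb{N}}$ of strictly positive real numbers consider the function \[ k_{\boldsymbol{\tau}}(x) := \sum_{m=1}^\infty \tau_m \frac{\sqrt2}{\pi m}\sin(m\pi x),\qquad x\in D, \] which is called pointwise well-defined if this series converges for every $x\in D$. Then: (i) for $\tau_m = m^{1/q}$ with $q>1$, the function $k_{\boldsymbol{\tau}}$ is pointwise well-defined on $D$, and in this case $(\tau_m^{-1})_{m\in\mathbb{N}}\in\ell^p(\mathbb{N})$ for every $p>q>1$; (ii) if $k_{\boldsymbol{\tau}}\colon[0,1]\to\mathbb{R}$ is pointwise well-defined for a sequence $\boldsymbol{\tau}$ with $(\tau_m^{-1})_{m\in\mathbb{N}}\in\ell^p(\mathbb{N})$ for some $p\leq 2$, then $k_{\boldsymbol{\tau}}\notin L^\infty(D)$.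
   Context: The functions $\phi_m(x)=\frac{\sqrt2}{\pi m}\sin(\pi m x)$, $m\in\mathbb{N}$, are the (scaled) Karhunen--Lo\`eve expansion functions of the standard Brownian bridge on $[0,1]$, i.e. the centered Gaussian process with covariance $\min(x,x')-xx'$, which has the representation $B(x)=\sum_{m\ge1}\phi_m(x)\xi_m$ with $\xi_m$ i.i.d. standard normal. *)

theory Defs
  imports "HOL-Analysis.Analysis"
begin

definition kterm :: "(nat \<Rightarrow> real) \<Rightarrow> real \<Rightarrow> nat \<Rightarrow> real" where
  "kterm \<tau> x m = \<tau> m * (sqrt 2 / (pi * real m)) * sin (real m * pi * x)"

definition k_tau :: "(nat \<Rightarrow> real) \<Rightarrow> real \<Rightarrow> real" where
  "k_tau \<tau> x = (\<Sum>n. kterm \<tau> x (Suc n))"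

definition pointwise_wd :: "(nat \<Rightarrow> real) \<Rightarrow> bool" where
  "pointwise_wd \<tau> \<longleftrightarrow> (\<forall>x\<in>{0..1}. summable (\<lambda>n. kterm \<tau> x (Suc n)))"

definition inv_in_lp :: "(nat \<Rightarrow> real) \<Rightarrow> real \<Rightarrow> bool" where
  "inv_in_lp \<tau> p \<longleftrightarrow> summable (\<lambda>n. \<bar>1 / \<tau> (Suc n)\<bar> powr p)"

definition in_Linf_D :: "(real \<Rightarrow> real) \<Rightarrow> bool" where
  "in_Linf_D f \<longleftrightarrow> f \<in> borel_measurable (restrict_space lborel {0..1}) \<and>
     (\<exists>C. AE x in lborel. x \<in> {0..1} \<longrightarrow> \<bar>f x\<bar> \<le> C)"

end

theory Submission
  imports Defs
begin


lemma abel_identity: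
  fixes a v :: "nat \<Rightarrow> real"
  shows "(\<Sum>m<N. a m * v m) = (\<Sum>m<N. (\<Sum>i<Suc m. a i) * (v m - v (Suc m))) + (\<Sum>i<N. a i) * v N"
  by (induction N) (simp_all add: algebra_simps)

lemma abel_sums:
  fixes a v :: "nat \<Rightarrow> real"
  assumes B: "\<And>N. \<bar>\<Sum>i<N. a i\<bar> \<le> B"
    and v0: "v \<longlonglongrightarrow> 0"
    and bv: "summable (\<lambda>m. \<bar>v m - v (Suc m)\<bar>)"
  shows "(\<lambda>m. a m * v m) sums (\<Sum>m. (\<Sum>i<Suc m. a i) * (v m - v (Suc m)))"
proof -
  have sm: "summable (\<lambda>m. (\<Sum>i<Suc m. a i) * (v m - v (Suc m)))"
  proof (rule summable_comparison_test[OF _ summable_mult[OF bv, of B]])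
    show "\<exists>N. \<forall>n\<ge>N. norm ((\<Sum>i<Suc n. a i) * (v n - v (Suc n))) \<le> B * \<bar>v n - v (Suc n)\<bar>"
    proof (intro exI allI impI)
      fix n :: nat
      show "norm ((\<Sum>i<Suc n. a i) * (v n - v (Suc n))) \<le> B * \<bar>v n - v (Suc n)\<bar>"
        unfolding real_norm_def abs_mult by (rule mult_right_mono[OF B]) simp
    qed
  qed
  have z: "(\<lambda>N. (\<Sum>i<N. a i) * v N) \<longlonglongrightarrow> 0"
  proof (rule Lim_null_comparison[of _ "\<lambda>N. B * \<bar>v N\<bar>"])
    show "\<forall>\<^sub>F N in sequentially. norm ((\<Sum>i<N. a i) * v N) \<le> B * \<bar>v N\<bar>"
      unfolding real_norm_def abs_mult by (intro always_eventually allI mult_right_mono[OF B]) simp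
    show "(\<lambda>N. B * \<bar>v N\<bar>) \<longlonglongrightarrow> 0"
      using tendsto_mult[OF tendsto_const[of B] tendsto_rabs_zero[OF v0]] by simp
  qed
  have "(\<lambda>N. (\<Sum>m<N. (\<Sum>i<Suc m. a i) * (v m - v (Suc m))) + (\<Sum>i<N. a i) * v N)
        \<longlonglongrightarrow> (\<Sum>m. (\<Sum>i<Suc m. a i) * (v m - v (Suc m))) + 0"
    using tendsto_add[OF summable_LIMSEQ[OF sm] z] by simp
  then show ?thesis unfolding sums_def by (subst abel_identity) simp
qed

lemma sin_partial_bound:
  fixes t :: real
  assumes "sin (t/2) \<noteq> 0"
  shows "\<bar>\<Sum>m<N. sin (real m * t)\<bar> \<le> 1 / \<bar>sin (t/2)\<bar>"
proof -
  have id: "2 * sin (t/2) * (\<Sum>m<N. sin (real m * t)) = cos (t/2) - cos ((real N - 1/2) * t)" for N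
  proof (induction N)
    case 0 then show ?case by (simp add: algebra_simps)
  next
    case (Suc N)
    have "2 * sin (t/2) * sin (real N * t) = cos ((real N - 1/2) * t) - cos ((real N + 1/2) * t)"
    proof -
      have "cos ((real N - 1/2) * t) = cos (real N * t - t/2)" by (simp add: algebra_simps)
      moreover have "cos ((real N + 1/2) * t) = cos (real N * t + t/2)" by (simp add: algebra_simps)
      ultimately show ?thesis unfolding cos_diff cos_add by simp
    qed
    have "2 * sin (t/2) * (\<Sum>m<Suc N. sin (real m * t)) = 2 * sin (t/2) * (\<Sum>m<N. sin (real m * t)) + 2 * sin (t/2) * sin (real N * t)"
      by (simp add: distrib_left)
    also have "\<dots> = cos (t/2) - cos ((real (Suc N) - 1/2) * t)"
    proof -
      have e: "(real (Suc N) - 1/2) * t = (real N + 1/2) * t" by simp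
      show ?thesis unfolding Suc.IH \<open>2 * sin (t/2) * sin (real N * t) = _\<close> e by linarith
    qed
    finally show ?case .
  qed
  have "\<bar>cos (t/2) - cos ((real N - 1/2) * t)\<bar> \<le> 2"
    using abs_cos_le_one[of "t/2"] abs_cos_le_one[of "(real N - 1/2) * t"] by linarith
  then have "\<bar>sin (t/2)\<bar> * \<bar>\<Sum>m<N. sin (real m * t)\<bar> \<le> 1"
    using id[of N] by (simp add: abs_mult)
  then show ?thesis using assms by (simp add: field_simps)
qed


lemma abs_sin_lower:
  fixes y :: real and j :: int
  assumes "of_int j * pi + pi/4 \<le> y" "y \<le> of_int j * pi + 3*pi/4"
  shows "\<bar>sin y\<bar> \<ge> 1/2"
proof -
  define z where "z = y - of_int j * pi"
  have z1: "pi/4 \<le> z" "z \<le> 3*pi/4" using assms by (auto simp: z_def)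
  have "sin y = sin (z + pi * of_int j)" by (simp add: z_def mult_ac)
  also have "\<dots> = sin z * cos (pi * of_int j)" by (simp add: sin_add)
  finally have "\<bar>sin y\<bar> = \<bar>sin z\<bar>" by (simp add: abs_mult)
  moreover have "sin z \<ge> 1/2"
  proof -
    have s2: "sqrt 2 / 2 \<ge> (1/2::real)" by simp
    have key: "sin w \<ge> 1/2" if "pi/4 \<le> w" "w \<le> pi/2" for w
    proof -
      have "sin (pi/4) \<le> sin w"
        using that by (subst sin_mono_le_eq) (auto simp: field_simps)
      then show ?thesis using sin_45 s2 by linarith
    qed
    show ?thesis
    proof (cases "z \<le> pi/2")
      case True then show ?thesis using key z1 by auto
    next
      case False
      then have "sin (pi - z) \<ge> 1/2" using key[of "pi - z"] z1 by auto
      then show ?thesis by simp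
    qed
  qed
  ultimately show ?thesis by simp
qed

lemma cl_step:
  fixes c :: "nat \<Rightarrow> real"
  assumes ab: "a < b" and inf: "\<forall>N. \<exists>m\<ge>N. \<bar>c m\<bar> \<ge> \<epsilon>"
  shows "\<exists>m a' b'. m \<ge> N \<and> \<bar>c m\<bar> \<ge> \<epsilon> \<and> a \<le> a' \<and> a' < b' \<and> b' \<le> b \<and>
           (\<forall>x\<in>{a'..b'}. \<bar>sin (real m * pi * x)\<bar> \<ge> 1/2)"
proof -
  obtain m where m: "m \<ge> max N (nat \<lceil>2/(b-a)\<rceil> + 1)" "\<bar>c m\<bar> \<ge> \<epsilon>"
    using inf by blast
  have mpos: "real m > 0" using m(1) by simp
  have "real m \<ge> real (nat \<lceil>2/(b-a)\<rceil> + 1)" using m(1) by linarith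
  then have mbig: "real m > 2/(b-a)" by linarith
  define j where "j = \<lceil>a * real m\<rceil>"
  define a' where "a' = (of_int j + 1/4) / real m"
  define b' where "b' = (of_int j + 3/4) / real m"
  have ja: "a * real m \<le> of_int j" "of_int j < a * real m + 1"
    unfolding j_def by linarith+
  have "a \<le> a'"
  proof -
    have "a * real m \<le> of_int j + 1/4" using ja by linarith
    then show ?thesis unfolding a'_def using mpos by (simp add: field_simps)
  qed
  moreover have "a' < b'" unfolding a'_def b'_def using mpos by (simp add: divide_strict_right_mono)
  moreover have "b' \<le> b"
  proof -
    have "2 < (b - a) * real m" using mbig ab by (simp add: field_simps)
    then have "of_int j + 3/4 \<le> b * real m" using ja by (simp add: algebra_simps)
    then show ?thesis unfolding b'_def using mpos by (simp add: field_simps)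
  qed
  moreover have "\<forall>x\<in>{a'..b'}. \<bar>sin (real m * pi * x)\<bar> \<ge> 1/2"
  proof
    fix x assume x: "x \<in> {a'..b'}"
    have "of_int j + 1/4 \<le> real m * x" "real m * x \<le> of_int j + 3/4"
      using x mpos unfolding a'_def b'_def by (auto simp: field_simps)
    then have "(of_int j + 1/4) * pi \<le> real m * x * pi" "real m * x * pi \<le> (of_int j + 3/4) * pi"
      by (auto intro: mult_right_mono)
    then show "\<bar>sin (real m * pi * x)\<bar> \<ge> 1/2"
      by (intro abs_sin_lower[of j]) (auto simp: algebra_simps)
  qed
  ultimately show ?thesis using m by (intro exI[of _ m] exI[of _ a'] exI[of _ b']) auto
qed

lemma cantor_lebesgue:
  fixes c :: "nat \<Rightarrow> real"
  assumes lim: "\<forall>x\<in>{0..1}. (\<lambda>m. c m * sin (real m * pi * x)) \<longlonglongrightarrow> 0"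
  shows "c \<longlonglongrightarrow> 0"
proof (rule ccontr)
  assume "\<not> c \<longlonglongrightarrow> 0"
  then obtain \<epsilon> where e: "\<epsilon> > 0" "\<forall>N. \<exists>m\<ge>N. \<bar>c m\<bar> \<ge> \<epsilon>"
    unfolding LIMSEQ_def dist_real_def by (auto simp: not_less)
  define P where "P = (\<lambda>(n::nat) (t::real \<times> real \<times> nat). 0 \<le> fst t \<and> fst t < fst (snd t) \<and> fst (snd t) \<le> 1)"
  define Q where "Q = (\<lambda>(n::nat) (t::real \<times> real \<times> nat) (t'::real \<times> real \<times> nat).
     fst t \<le> fst t' \<and> fst (snd t') \<le> fst (snd t) \<and> snd (snd t') \<ge> n \<and> \<bar>c (snd (snd t'))\<bar> \<ge> \<epsilon> \<and>
     (\<forall>x\<in>{fst t'..fst (snd t')}. \<bar>sin (real (snd (snd t')) * pi * x)\<bar> \<ge> 1/2))"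
  have "\<exists>f. \<forall>n. P n (f n) \<and> Q n (f n) (f (Suc n))"
  proof (rule dependent_nat_choice)
    show "\<exists>x. P 0 x" by (rule exI[of _ "(0,1,0)"]) (simp add: P_def)
  next
    fix t n assume "P n t"
    then obtain a b k where t: "t = (a,b,k)" "0 \<le> a" "a < b" "b \<le> 1"
      unfolding P_def by (cases t) auto
    obtain m a' b' where "m \<ge> n" "\<bar>c m\<bar> \<ge> \<epsilon>" "a \<le> a'" "a' < b'" "b' \<le> b"
        "\<forall>x\<in>{a'..b'}. \<bar>sin (real m * pi * x)\<bar> \<ge> 1/2"
      using cl_step[OF t(3) e(2), of n] by blast
    then show "\<exists>y. P (Suc n) y \<and> Q n t y"
      using t by (intro exI[of _ "(a',b',m)"]) (auto simp: P_def Q_def)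
  qed
  then obtain f where f: "\<And>n. P n (f n)" "\<And>n. Q n (f n) (f (Suc n))" by blast
  define I where "I n = {fst (f n)..fst (snd (f n))}" for n
  have nest: "I n' \<subseteq> I n" if "n \<le> n'" for n n'
  proof (rule lift_Suc_antimono_le[of I, OF _ that])
    fix k show "I (Suc k) \<le> I k" using f(2)[of k] unfolding I_def Q_def by auto
  qed
  have "\<Inter>(range I) \<noteq> {}"
  proof (rule compact_nest)
    fix n show "compact (I n)" by (simp add: I_def)
    show "I n \<noteq> {}" using f(1)[of n] by (simp add: I_def P_def)
  next
    fix n n' :: nat assume "n \<le> n'" then show "I n' \<subseteq> I n" by (rule nest)
  qed
  then obtain x where x: "\<And>n. x \<in> I n" by blast
  have x01: "x \<in> {0..1}" using x[of 0] f(1)[of 0] unfolding I_def P_def by auto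
  obtain N0 where N0: "\<And>m. m \<ge> N0 \<Longrightarrow> \<bar>c m * sin (real m * pi * x)\<bar> < \<epsilon>/2"
    using lim x01 e(1) unfolding LIMSEQ_def dist_real_def
    by (metis half_gt_zero diff_zero)
  define m where "m = snd (snd (f (Suc N0)))"
  have m1: "m \<ge> N0" and s: "\<bar>sin (real m * pi * x)\<bar> \<ge> 1/2" and cm: "\<bar>c m\<bar> \<ge> \<epsilon>"
    using f(2)[of N0] x[of "Suc N0"] unfolding Q_def I_def m_def by auto
  have "\<epsilon> * (1/2) \<le> \<bar>c m\<bar> * \<bar>sin (real m * pi * x)\<bar>"
    by (rule mult_mono) (use cm s e in auto)
  then show False using N0[OF m1] by (simp add: abs_mult)
qed


definition rk :: "real \<Rightarrow> real" where
  "rk y = (if y = 0 then 1 else (sin y / y)^2)"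

lemma rk_nonneg: "0 \<le> rk y" by (simp add: rk_def)

lemma rk_le1: "rk y \<le> 1"
proof (cases "y = 0")
  case False
  have "\<bar>sin y / y\<bar> \<le> 1" using abs_sin_x_le_abs_x[of y] False by (simp add: abs_div field_simps)
  then have "(sin y / y)^2 \<le> 1^2"
    by (metis abs_le_square_iff one_power2 power2_abs abs_one)
  then show ?thesis using False by (simp add: rk_def)
qed (simp add: rk_def)

lemma rk_le_inv: "y \<noteq> 0 \<Longrightarrow> rk y \<le> 1 / y^2"
proof -
  assume y: "y \<noteq> 0"
  have "(sin y)^2 \<le> 1" by (simp add: abs_square_le_1)
  then show ?thesis using y by (simp add: rk_def power_divide divide_right_mono)
qed

lemma sinc_lim0: "((\<lambda>y. sin y / y) \<longlongrightarrow> (1::real)) (at 0)"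
  using DERIV_sin[of 0] unfolding has_field_derivative_iff by simp

lemma isCont_rk0: "isCont rk 0"
proof -
  have "((\<lambda>y. (sin y / y)^2) \<longlongrightarrow> (1::real)) (at 0)"
    using tendsto_power[OF sinc_lim0, of 2] by simp
  then have "(rk \<longlongrightarrow> 1) (at 0)"
    by (subst LIM_equal[where g = "\<lambda>y. (sin y / y)^2"]) (auto simp: rk_def)
  then show ?thesis unfolding isCont_def by (simp add: rk_def)
qed

lemma ycos_bound:
  fixes y :: real assumes "y \<ge> 0"
  shows "\<bar>y * cos y - sin y\<bar> \<le> y^3"
proof (cases "y = 0")
  case False
  then have y: "y > 0" using assms by auto
  have "\<exists>z. 0 < z \<and> z < y \<and> (y * cos y - sin y) - (0 * cos 0 - sin 0) = (y - 0) * (- z * sin z)"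
    by (rule MVT2[OF y]) (auto intro!: derivative_eq_intros simp: algebra_simps)
  then obtain z where z: "0 < z" "z < y" "y * cos y - sin y = y * (- z * sin z)" by auto
  have "\<bar>z * sin z\<bar> \<le> z * z"
    using abs_sin_x_le_abs_x[of z] z by (simp add: abs_mult mult_left_mono)
  also have "\<dots> \<le> y * y" using z by (intro mult_mono) auto
  finally have "\<bar>y * (- z * sin z)\<bar> \<le> y * (y * y)"
    using y by (simp add: abs_mult mult_left_mono)
  then show ?thesis using z(3) by (simp add: power3_eq_cube)
qed simp

definition rkd :: "real \<Rightarrow> real" where
  "rkd y = 2 * sin y * (y * cos y - sin y) / y^3"

lemma rk_deriv: "y > 0 \<Longrightarrow> ((\<lambda>y. (sin y / y)^2) has_real_derivative rkd y) (at y)"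
  unfolding rkd_def
  by (rule derivative_eq_intros refl | simp)+ (simp add: field_simps power2_eq_square power3_eq_cube)

lemma rkd_bound2:
  assumes y: "y \<ge> 1" shows "\<bar>rkd y\<bar> \<le> 4 / y^2"
proof -
  have a: "\<bar>y * cos y - sin y\<bar> \<le> 2 * y"
  proof -
    have "\<bar>y * cos y\<bar> \<le> y" using y abs_cos_le_one[of y] by (simp add: abs_mult mult_left_le)
    moreover have "\<bar>sin y\<bar> \<le> y" using y abs_sin_le_one[of y] by linarith
    ultimately show ?thesis by linarith
  qed
  have "\<bar>2 * sin y * (y * cos y - sin y)\<bar> \<le> 2 * 1 * (2 * y)"
    unfolding abs_mult by (intro mult_mono a) auto
  moreover have "\<bar>y^3\<bar> = y^3" using y by simp
  ultimately have "\<bar>rkd y\<bar> \<le> 4 * y / y^3"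
    unfolding rkd_def abs_divide using y by (simp add: divide_right_mono)
  also have "\<dots> = 4 / y^2" using y by (simp add: power2_eq_square power3_eq_cube)
  finally show ?thesis .
qed

lemma rkd_bound1:
  assumes y: "y > 0" shows "\<bar>rkd y\<bar> \<le> 4"
proof (cases "y \<ge> 1")
  case True
  have "4 / y^2 \<le> 4" using True by (simp add: field_simps)
  then show ?thesis using rkd_bound2[OF True] by linarith
next
  case False
  have "\<bar>2 * sin y * (y * cos y - sin y)\<bar> \<le> 2 * y * y^3"
    unfolding abs_mult using abs_sin_x_le_abs_x[of y] ycos_bound[of y] y
    by (intro mult_mono) auto
  moreover have "\<bar>y^3\<bar> = y^3" using y by simp
  ultimately have "\<bar>rkd y\<bar> \<le> 2 * y"
    unfolding rkd_def abs_divide using y by (simp add: pos_divide_le_eq algebra_simps)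
  then show ?thesis using False by linarith
qed

lemma rk_incr:
  assumes th: "\<theta> > 0" and m: "m \<ge> 1"
  shows "\<bar>rk (real m * \<theta>) - rk (real (Suc m) * \<theta>)\<bar> \<le> 4 * \<theta>"
    and "real m * \<theta> \<ge> 1 \<Longrightarrow> \<bar>rk (real m * \<theta>) - rk (real (Suc m) * \<theta>)\<bar> \<le> 4 / (\<theta> * real m ^ 2)"
proof -
  have lt: "real m * \<theta> < real (Suc m) * \<theta>" using th by simp
  have pos: "real m * \<theta> > 0" using th m by simp
  obtain z where z: "real m * \<theta> < z" "z < real (Suc m) * \<theta>"
    "(sin (real (Suc m) * \<theta>) / (real (Suc m) * \<theta>))^2 - (sin (real m * \<theta>) / (real m * \<theta>))^2
      = (real (Suc m) * \<theta> - real m * \<theta>) * rkd z"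
    using MVT2[OF lt, of "\<lambda>y. (sin y / y)^2" rkd] rk_deriv pos by force
  have eq: "\<bar>rk (real m * \<theta>) - rk (real (Suc m) * \<theta>)\<bar> = \<theta> * \<bar>rkd z\<bar>"
  proof -
    have "\<theta> + \<theta> * real m > 0" using th by (simp add: add_pos_nonneg)
    then have "rk (real m * \<theta>) - rk (real (Suc m) * \<theta>) = - (\<theta> * rkd z)"
      using z(3) pos th m unfolding rk_def by (simp add: algebra_simps)
    then show ?thesis using th by (simp add: abs_mult)
  qed
  show "\<bar>rk (real m * \<theta>) - rk (real (Suc m) * \<theta>)\<bar> \<le> 4 * \<theta>"
    unfolding eq using rkd_bound1[of z] z pos th by (simp add: mult_left_mono mult.commute)
  assume big: "real m * \<theta> \<ge> 1"
  have "\<bar>rkd z\<bar> \<le> 4 / z^2" using rkd_bound2[of z] big z by simp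
  also have "\<dots> \<le> 4 / (real m * \<theta>)^2"
    using z pos th m order.strict_trans[OF pos z(1)] by (intro divide_left_mono power_mono mult_pos_pos zero_less_power) auto
  finally have "\<theta> * \<bar>rkd z\<bar> \<le> \<theta> * (4 / (real m * \<theta>)^2)"
    using th by (intro mult_left_mono) auto
  also have "\<dots> = 4 / (\<theta> * real m ^ 2)" using th by (simp add: power2_eq_square field_simps)
  finally show "\<bar>rk (real m * \<theta>) - rk (real (Suc m) * \<theta>)\<bar> \<le> 4 / (\<theta> * real m ^ 2)"
    unfolding eq .
qed

lemma inv_sq_tel:
  assumes K: "2 \<le> K"
  shows "(\<Sum>m\<in>{K..<K+j}. 1 / (real m)^2) \<le> 1 / (real K - 1) - 1 / (real (K+j) - 1)"
proof (induction j)
  case 0 then show ?case by simp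
next
  case (Suc j)
  define n where "n = real (K + j)"
  have n2: "n \<ge> 2" using K by (simp add: n_def)
  have "1 / n^2 \<le> 1 / (n - 1) - 1 / n"
  proof -
    have "1 / (n - 1) - 1 / n = 1 / ((n - 1) * n)" using n2 by (simp add: field_simps)
    moreover have "1 / n^2 \<le> 1 / ((n - 1) * n)"
      using n2 by (intro divide_left_mono) (auto simp: power2_eq_square intro!: mult_right_mono mult_pos_pos)
    ultimately show ?thesis by simp
  qed
  moreover have "(\<Sum>m\<in>{K..<K+Suc j}. 1 / (real m)^2) = (\<Sum>m\<in>{K..<K+j}. 1 / (real m)^2) + 1 / n^2"
    by (simp add: n_def)
  moreover have "real (K + Suc j) - 1 = n" by (simp add: n_def)
  ultimately show ?case using Suc.IH by (simp add: n_def)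
qed

lemma rk_tv_partial:
  assumes th: "0 < \<theta>" "\<theta> \<le> 1/2"
  shows "(\<Sum>m<M. \<bar>rk (real m * \<theta>) - rk (real (Suc m) * \<theta>)\<bar>) \<le> 13"
proof -
  define d where "d m = \<bar>rk (real m * \<theta>) - rk (real (Suc m) * \<theta>)\<bar>" for m
  define K where "K = nat \<lceil>1/\<theta>\<rceil>"
  have inv2: "1/\<theta> \<ge> 2" using th by (simp add: field_simps)
  have Kc: "real K = real_of_int \<lceil>1/\<theta>\<rceil>" unfolding K_def using th by simp
  have K1: "real K \<ge> 1/\<theta>" "real K < 1/\<theta> + 1" unfolding Kc using ceiling_correct[of "1/\<theta>"] by linarith+
  have K2: "K \<ge> 2" using K1 inv2 by linarith
  define L where "L = M + K"
  have "(\<Sum>m<M. d m) \<le> (\<Sum>m<L. d m)"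
    by (rule sum_mono2) (auto simp: L_def d_def)
  also have "(\<Sum>m<L. d m) = d 0 + (\<Sum>m\<in>{1..<K}. d m) + (\<Sum>m\<in>{K..<L}. d m)"
  proof -
    have "(\<Sum>m<L. d m) = (\<Sum>m\<in>{0..<1}. d m) + (\<Sum>m\<in>{1..<L}. d m)"
      unfolding lessThan_atLeast0 using K2 by (subst sum.atLeastLessThan_concat) (auto simp: L_def)
    also have "(\<Sum>m\<in>{1..<L}. d m) = (\<Sum>m\<in>{1..<K}. d m) + (\<Sum>m\<in>{K..<L}. d m)"
      using K2 by (subst sum.atLeastLessThan_concat) (auto simp: L_def)
    finally show ?thesis by simp
  qed
  also have "\<dots> \<le> 1 + 4 + 8"
  proof (intro add_mono)
    show "d 0 \<le> 1" using rk_nonneg[of \<theta>] rk_le1[of \<theta>] by (simp add: d_def rk_def)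
    have "(\<Sum>m\<in>{1..<K}. d m) \<le> (\<Sum>m\<in>{1..<K}. 4 * \<theta>)"
      by (rule sum_mono) (use rk_incr(1)[OF th(1)] in \<open>auto simp: d_def\<close>)
    also have "\<dots> = (real K - 1) * (4 * \<theta>)" using K2 by (simp add: of_nat_diff)
    also have "\<dots> \<le> (1/\<theta>) * (4 * \<theta>)" using K1 th by (intro mult_right_mono) auto
    also have "\<dots> = 4" using th by simp
    finally show "(\<Sum>m\<in>{1..<K}. d m) \<le> 4" .
    have "(\<Sum>m\<in>{K..<L}. d m) \<le> (\<Sum>m\<in>{K..<L}. (4/\<theta>) * (1 / (real m)^2))"
    proof (rule sum_mono)
      fix m assume m: "m \<in> {K..<L}"
      then have "real m \<ge> real K" by simp
      then have "real m * \<theta> \<ge> real K * \<theta>" using th by (intro mult_right_mono) auto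
      moreover have "real K * \<theta> \<ge> 1" using K1 th by (simp add: field_simps)
      ultimately have "real m * \<theta> \<ge> 1" by linarith
      moreover have "m \<ge> 1" using m K2 by auto
      ultimately show "d m \<le> (4/\<theta>) * (1 / (real m)^2)"
        using rk_incr(2)[OF th(1), of m] unfolding d_def by simp
    qed
    also have "\<dots> = (4/\<theta>) * (\<Sum>m\<in>{K..<K+M}. 1 / (real m)^2)"
      by (simp add: sum_distrib_left L_def add.commute)
    also have "\<dots> \<le> (4/\<theta>) * (1 / (real K - 1))"
    proof (rule mult_left_mono)
      have "1 / (real (K+M) - 1) \<ge> 0" using K2 by simp
      then show "(\<Sum>m\<in>{K..<K+M}. 1 / (real m)^2) \<le> 1 / (real K - 1)"
        using inv_sq_tel[OF K2, of M] by linarith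
    qed (use th in simp)
    also have "\<dots> \<le> 8"
    proof -
      have "real K - 1 \<ge> 1 / (2 * \<theta>)" using K1 inv2 th by (simp add: field_simps)
      moreover have "1 / (2*\<theta>) > 0" using th by simp
      moreover have "real K - 1 > 0" using K2 by simp
      ultimately have "1 \<le> 2 * \<theta> * (real K - 1)"
        using th by (simp add: field_simps)
      then have "1 / (real K - 1) \<le> 2 * \<theta>"
        using \<open>real K - 1 > 0\<close> by (simp add: pos_divide_le_eq)
      then have "(4/\<theta>) * (1 / (real K - 1)) \<le> (4/\<theta>) * (2 * \<theta>)"
        using th by (intro mult_left_mono) auto
      then show ?thesis using th by simp
    qed
    finally show "(\<Sum>m\<in>{K..<L}. d m) \<le> 8" .
  qed
  finally show ?thesis unfolding d_def by simp
qed

lemma rk_tv: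
  assumes th: "0 < \<theta>" "\<theta> \<le> 1/2"
  shows "summable (\<lambda>m. \<bar>rk (real m * \<theta>) - rk (real (Suc m) * \<theta>)\<bar>)"
    and "(\<Sum>m. \<bar>rk (real m * \<theta>) - rk (real (Suc m) * \<theta>)\<bar>) \<le> 13"
proof -
  show s: "summable (\<lambda>m. \<bar>rk (real m * \<theta>) - rk (real (Suc m) * \<theta>)\<bar>)"
  proof (rule bounded_imp_summable[of _ 13])
    fix n show "(\<Sum>k\<le>n. \<bar>rk (real k * \<theta>) - rk (real (Suc k) * \<theta>)\<bar>) \<le> 13"
      unfolding lessThan_Suc_atMost[symmetric] by (rule rk_tv_partial[OF th])
  qed simp
  show "(\<Sum>m. \<bar>rk (real m * \<theta>) - rk (real (Suc m) * \<theta>)\<bar>) \<le> 13"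
    by (rule suminf_le_const[OF s rk_tv_partial[OF th]])
qed


lemma rk_seq_zero:
  assumes th: "\<theta> > 0"
  shows "(\<lambda>m. rk (real m * \<theta>)) \<longlonglongrightarrow> 0"
proof (rule Lim_null_comparison[of _ "\<lambda>m. (1 / real m)^2 * (1 / \<theta>^2)"])
  show "\<forall>\<^sub>F m in sequentially. norm (rk (real m * \<theta>)) \<le> (1 / real m)^2 * (1 / \<theta>^2)"
  proof (rule eventually_sequentiallyI[of 1])
    fix m :: nat assume "1 \<le> m"
    then have "real m * \<theta> \<noteq> 0" using th by simp
    then show "norm (rk (real m * \<theta>)) \<le> (1 / real m)^2 * (1 / \<theta>^2)"
      using rk_le_inv[of "real m * \<theta>"] rk_nonneg[of "real m * \<theta>"]
      by (simp add: power_mult_distrib power_divide)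
  qed
  show "(\<lambda>m. (1 / real m)^2 * (1 / \<theta>^2)) \<longlonglongrightarrow> 0"
    using tendsto_mult[OF tendsto_power[OF lim_1_over_n, of 2] tendsto_const[of "1/\<theta>^2"]] by simp
qed

lemma riemann_lemma:
  fixes a :: "nat \<Rightarrow> real"
  assumes as: "a sums s"
  shows "\<forall>\<^sub>F \<theta> in at_right 0. summable (\<lambda>m. a m * rk (real m * \<theta>))"
    and "((\<lambda>\<theta>. \<Sum>m. a m * rk (real m * \<theta>)) \<longlongrightarrow> s) (at_right 0)"
proof -
  define S where "S N = (\<Sum>i<N. a i)" for N
  have Slim: "S \<longlonglongrightarrow> s" using as unfolding sums_def S_def .
  obtain B where B: "B > 0" "\<And>N. \<bar>S N\<bar> \<le> B"
    using convergent_imp_Bseq[OF convergentI[OF Slim]] by (auto elim!: BseqE)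
  define C0 where "C0 = B + \<bar>s\<bar>"
  have C0: "\<bar>S (Suc m) - s\<bar> \<le> C0" for m using B(2)[of "Suc m"] unfolding C0_def by linarith
  define dv where "dv \<theta> m = rk (real m * \<theta>) - rk (real (Suc m) * \<theta>)" for \<theta> m
  define T where "T \<theta> = (\<Sum>m. S (Suc m) * dv \<theta> m)" for \<theta>
  have key: "(\<lambda>m. a m * rk (real m * \<theta>)) sums T \<theta>"
    and est: "\<bar>T \<theta> - s\<bar> \<le> (\<Sum>m. \<bar>S (Suc m) - s\<bar> * \<bar>dv \<theta> m\<bar>)"
    and sest: "summable (\<lambda>m. \<bar>S (Suc m) - s\<bar> * \<bar>dv \<theta> m\<bar>)"
    if th: "0 < \<theta>" "\<theta> \<le> 1/2" for \<theta>
  proof -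
    have bv: "summable (\<lambda>m. \<bar>dv \<theta> m\<bar>)" using rk_tv(1)[OF th] unfolding dv_def .
    show "(\<lambda>m. a m * rk (real m * \<theta>)) sums T \<theta>"
      using abel_sums[of a B "\<lambda>m. rk (real m * \<theta>)", OF _ rk_seq_zero[OF th(1)]] B bv
      unfolding T_def S_def dv_def by simp
    have tel: "(\<lambda>m. dv \<theta> m) sums 1"
      using telescope_sums'[OF rk_seq_zero[OF th(1)]] unfolding dv_def by (simp add: rk_def)
    have s1: "summable (\<lambda>m. S (Suc m) * dv \<theta> m)"
    proof (rule summable_comparison_test[OF _ summable_mult[OF bv, of B]])
      show "\<exists>N. \<forall>n\<ge>N. norm (S (Suc n) * dv \<theta> n) \<le> B * \<bar>dv \<theta> n\<bar>"
        using B(2) by (auto simp: abs_mult intro!: mult_right_mono)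
    qed
    have sT: "(\<lambda>m. S (Suc m) * dv \<theta> m) sums T \<theta>" using summable_sums[OF s1] unfolding T_def .
    have "(\<lambda>m. S (Suc m) * dv \<theta> m - s * dv \<theta> m) sums (T \<theta> - s * 1)"
      by (rule sums_diff[OF sT sums_mult[OF tel]])
    then have d: "(\<lambda>m. (S (Suc m) - s) * dv \<theta> m) sums (T \<theta> - s)"
      by (simp add: algebra_simps)
    show ss: "summable (\<lambda>m. \<bar>S (Suc m) - s\<bar> * \<bar>dv \<theta> m\<bar>)"
    proof (rule summable_comparison_test[OF _ summable_mult[OF bv, of C0]])
      show "\<exists>N. \<forall>n\<ge>N. norm (\<bar>S (Suc n) - s\<bar> * \<bar>dv \<theta> n\<bar>) \<le> C0 * \<bar>dv \<theta> n\<bar>"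
        using C0 by (auto intro!: mult_right_mono)
    qed
    have "norm (\<Sum>m. (S (Suc m) - s) * dv \<theta> m) \<le> (\<Sum>m. norm ((S (Suc m) - s) * dv \<theta> m))"
      by (rule summable_norm) (use ss in \<open>simp add: abs_mult\<close>)
    then show "\<bar>T \<theta> - s\<bar> \<le> (\<Sum>m. \<bar>S (Suc m) - s\<bar> * \<bar>dv \<theta> m\<bar>)"
      using sums_unique[OF d] by (simp add: abs_mult)
  qed
  have ev: "\<forall>\<^sub>F \<theta> in at_right (0::real). 0 < \<theta> \<and> \<theta> \<le> 1/2"
    unfolding eventually_at_right_field by (rule exI[of _ "1/2"]) auto
  show "\<forall>\<^sub>F \<theta> in at_right 0. summable (\<lambda>m. a m * rk (real m * \<theta>))"
    using ev by eventually_elim (use key in \<open>auto simp: sums_iff\<close>)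
  show "((\<lambda>\<theta>. \<Sum>m. a m * rk (real m * \<theta>)) \<longlongrightarrow> s) (at_right 0)"
  proof (rule tendstoI)
    fix \<epsilon> :: real assume e: "\<epsilon> > 0"
    obtain N0 where N0: "\<And>m. m \<ge> N0 \<Longrightarrow> \<bar>S (Suc m) - s\<bar> \<le> \<epsilon> / 26"
    proof -
      have "(\<lambda>m. S (Suc m)) \<longlonglongrightarrow> s" using LIMSEQ_Suc[OF Slim] .
      then obtain N where "\<forall>m\<ge>N. dist (S (Suc m)) s < \<epsilon>/26"
        using e unfolding LIMSEQ_def by (meson divide_pos_pos zero_less_numeral)
      then have "\<And>m. m \<ge> N \<Longrightarrow> \<bar>S (Suc m) - s\<bar> \<le> \<epsilon> / 26"
        by (auto simp: dist_real_def less_imp_le)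
      then show ?thesis using that by blast
    qed
    define D where "D \<theta> = (\<Sum>m<N0. \<bar>dv \<theta> m\<bar>)" for \<theta>
    have Dlim: "(D \<longlongrightarrow> 0) (at_right 0)"
    proof -
      have r: "((\<lambda>\<theta>. rk (real m * \<theta>)) \<longlongrightarrow> 1) (at_right 0)" for m
      proof -
        have "((\<lambda>\<theta>::real. real m * \<theta>) \<longlongrightarrow> 0) (at_right 0)"
          using tendsto_mult[OF tendsto_const[of "real m"] tendsto_ident_at[of 0 "{0<..}"]] by simp
        from isCont_tendsto_compose[OF isCont_rk0 this] show ?thesis by (simp add: rk_def)
      qed
      have "(D \<longlongrightarrow> (\<Sum>m<N0. \<bar>1 - 1\<bar>)) (at_right 0)"
        unfolding D_def dv_def by (intro tendsto_intros r)
      then show ?thesis by simp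
    qed
    have "\<forall>\<^sub>F \<theta> in at_right 0. D \<theta> < \<epsilon> / (2 * (C0 + 1))"
      using order_tendstoD(2)[OF Dlim] e C0[of 0] by (simp add: add_nonneg_pos)
    with ev show "\<forall>\<^sub>F \<theta> in at_right 0. dist (\<Sum>m. a m * rk (real m * \<theta>)) s < \<epsilon>"
    proof eventually_elim
      case (elim \<theta>)
      then have th: "0 < \<theta>" "\<theta> \<le> 1/2" and Dsmall: "D \<theta> < \<epsilon> / (2 * (C0 + 1))" by auto
      have C0nn: "C0 \<ge> 0" using C0[of 0] by linarith
      have bv: "summable (\<lambda>m. \<bar>dv \<theta> m\<bar>)" using rk_tv(1)[OF th] unfolding dv_def .
      have bv13: "(\<Sum>m. \<bar>dv \<theta> m\<bar>) \<le> 13" using rk_tv(2)[OF th] unfolding dv_def .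
      define g where "g m = (if m < N0 then C0 * \<bar>dv \<theta> m\<bar> else 0)" for m
      have gs: "(\<Sum>m. g m) = C0 * D \<theta>"
        by (subst suminf_finite[of "{..<N0}"]) (auto simp: g_def D_def sum_distrib_left)
      have gsum: "summable g" by (rule summable_finite[of "{..<N0}"]) (auto simp: g_def)
      have le: "\<bar>S (Suc m) - s\<bar> * \<bar>dv \<theta> m\<bar> \<le> g m + \<epsilon>/26 * \<bar>dv \<theta> m\<bar>" for m
      proof (cases "m < N0")
        case True
        have "\<bar>S (Suc m) - s\<bar> * \<bar>dv \<theta> m\<bar> \<le> C0 * \<bar>dv \<theta> m\<bar>"
          using C0[of m] by (intro mult_right_mono) auto
        moreover have "0 \<le> \<epsilon>/26 * \<bar>dv \<theta> m\<bar>" using e by simp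
        ultimately show ?thesis using True by (simp add: g_def)
      next
        case False
        have "\<bar>S (Suc m) - s\<bar> * \<bar>dv \<theta> m\<bar> \<le> \<epsilon>/26 * \<bar>dv \<theta> m\<bar>"
          using N0[of m] False by (intro mult_right_mono) auto
        then show ?thesis using False by (simp add: g_def)
      qed
      have "\<bar>T \<theta> - s\<bar> \<le> (\<Sum>m. \<bar>S (Suc m) - s\<bar> * \<bar>dv \<theta> m\<bar>)" by (rule est[OF th])
      also have "\<dots> \<le> (\<Sum>m. g m + \<epsilon>/26 * \<bar>dv \<theta> m\<bar>)"
        by (rule suminf_le[OF le sest[OF th]]) (intro summable_add gsum summable_mult bv)
      also have "\<dots> = C0 * D \<theta> + \<epsilon>/26 * (\<Sum>m. \<bar>dv \<theta> m\<bar>)"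
        using suminf_add[OF gsum summable_mult[OF bv, of "\<epsilon>/26"]] suminf_mult[OF bv, of "\<epsilon>/26"] gs by simp
      also have "\<dots> < \<epsilon>"
      proof -
        have "C0 * D \<theta> \<le> (C0 + 1) * D \<theta>"
          using C0nn by (intro mult_right_mono) (auto simp: D_def)
        also have "\<dots> < (C0 + 1) * (\<epsilon> / (2 * (C0 + 1)))"
          using Dsmall C0nn by (intro mult_strict_left_mono) auto
        also have "\<dots> = \<epsilon>/2" using C0nn by (simp add: field_simps)
        finally have "C0 * D \<theta> < \<epsilon>/2" .
        moreover have "\<epsilon>/26 * (\<Sum>m. \<bar>dv \<theta> m\<bar>) \<le> \<epsilon>/26 * 13"
          using bv13 e by (intro mult_left_mono) auto
        ultimately show ?thesis by simp
      qed
      finally have "\<bar>T \<theta> - s\<bar> < \<epsilon>" .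
      then show ?case using sums_unique[OF key[OF th]] by (simp add: dist_real_def)
    qed
  qed
qed


lemma int_ind:
  fixes f :: "real \<Rightarrow> real"
  assumes V: "V \<in> sets borel" "emeasure lborel V < \<infinity>"
    and f: "f \<in> borel_measurable borel" and M: "\<And>r. r \<in> V \<Longrightarrow> \<bar>f r\<bar> \<le> M"
  shows "integrable lborel (\<lambda>r. indicator V r * f r)"
proof (rule Bochner_Integration.integrable_bound[of _ "\<lambda>r. M * indicator V r"])
  show "integrable lborel (\<lambda>r. M * indicator V r :: real)"
    using V by (intro integrable_mult_right) auto
  show "(\<lambda>r. indicator V r * f r) \<in> borel_measurable lborel"
    using V f by measurable
  show "AE x in lborel. norm (indicator V x * f x) \<le> norm (M * indicator V x :: real)"
    using M by (auto simp: indicator_def abs_mult intro!: AE_I2 order.trans[OF M abs_ge_self])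
qed

definition wfun :: "real set \<Rightarrow> real \<Rightarrow> real" where
  "wfun V t = (LINT r|lborel. indicator V r * max 0 (t - r))"

definition hat :: "real \<Rightarrow> real \<Rightarrow> real \<Rightarrow> real" where
  "hat t h r = max 0 (t + h - r) + max 0 (t - h - r) - 2 * max 0 (t - r)"

context
  fixes V :: "real set" and R :: real
  assumes Vo: "open V" and VR: "V \<subseteq> {-R<..<R}"
begin

lemma V_sets: "V \<in> sets borel" using Vo by simp

lemma V_fin: "emeasure lborel V < \<infinity>"
proof -
  have "emeasure lborel V \<le> emeasure lborel {-\<bar>R\<bar>..\<bar>R\<bar>}"
    using VR by (intro emeasure_mono) auto
  also have "\<dots> < \<infinity>" by (simp add: emeasure_lborel_Icc)
  finally show ?thesis .
qed

lemma rV: "r \<in> V \<Longrightarrow> -R < r \<and> r < R" using VR by auto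

lemma w_int: "integrable lborel (\<lambda>r. indicator V r * max 0 (t - r))"
  by (rule int_ind[OF V_sets V_fin, of _ "\<bar>t\<bar> + \<bar>R\<bar>"]) (auto dest!: rV simp: max_def)

lemma hat_int: "integrable lborel (\<lambda>r. indicator V r * hat t h r)"
  unfolding hat_def
  by (rule int_ind[OF V_sets V_fin, of _ "4 * (\<bar>t\<bar> + \<bar>h\<bar> + \<bar>R\<bar>)"]) (auto dest!: rV simp: max_def)

lemma w_nonneg: "0 \<le> wfun V t"
  unfolding wfun_def by (intro Bochner_Integration.integral_nonneg) (auto simp: indicator_def)

lemma w_d2: "wfun V (t + h) + wfun V (t - h) - 2 * wfun V t = (LINT r|lborel. indicator V r * hat t h r)"
proof -
  have "(LINT r|lborel. indicator V r * hat t h r) =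
     (LINT r|lborel. indicator V r * max 0 (t + h - r) + indicator V r * max 0 (t - h - r) - 2 * (indicator V r * max 0 (t - r)))"
    by (intro Bochner_Integration.integral_cong) (auto simp: hat_def algebra_simps)
  also have "\<dots> = wfun V (t + h) + wfun V (t - h) - 2 * wfun V t"
    unfolding wfun_def
    using w_int[of "t+h"] w_int[of "t-h"] w_int[of t]
    by simp
  finally show ?thesis by simp
qed

lemma hat_nonneg: "h \<ge> 0 \<Longrightarrow> hat t h r \<ge> 0"
  unfolding hat_def by (auto simp: max_def)

lemma w_d2_nonneg: "h \<ge> 0 \<Longrightarrow> wfun V (t + h) + wfun V (t - h) - 2 * wfun V t \<ge> 0"
  unfolding w_d2 by (intro Bochner_Integration.integral_nonneg) (auto simp: indicator_def hat_nonneg)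

lemma w_d2_big:
  assumes h: "h > 0" and sub: "{t - h/2..t + h/2} \<subseteq> V"
  shows "wfun V (t + h) + wfun V (t - h) - 2 * wfun V t \<ge> h^2 / 2"
proof -
  have "(LINT r|lborel. (h/2) * indicator {t - h/2..t + h/2} r) \<le> (LINT r|lborel. indicator V r * hat t h r)"
  proof (rule Bochner_Integration.integral_mono)
    show "integrable lborel (\<lambda>r. h / 2 * indicator {t - h / 2..t + h / 2} r :: real)"
      using h by (intro integrable_mult_right integrable_real_indicator) (auto simp: emeasure_lborel_Icc)
    show "integrable lborel (\<lambda>r. indicator V r * hat t h r)" by (rule hat_int)
    fix r :: real
    show "h / 2 * indicator {t - h / 2..t + h / 2} r \<le> indicator V r * hat t h r"
    proof (cases "r \<in> {t - h / 2..t + h / 2}")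
      case True
      then have "r \<in> V" using sub by auto
      moreover have "hat t h r \<ge> h/2" using True h unfolding hat_def by (auto simp: max_def)
      ultimately show ?thesis using True by simp
    next
      case False
      then have "indicator {t - h / 2..t + h / 2} r = (0::real)" by (simp add: indicator_def)
      moreover have "0 \<le> indicator V r * hat t h r"
        using hat_nonneg[of h t r] h by (simp add: indicator_def)
      ultimately show ?thesis by simp
    qed
  qed
  moreover have "(LINT r|lborel. (h/2) * indicator {t - h/2..t + h/2} r) = h^2/2"
    using h by (simp add: power2_eq_square)
  ultimately show ?thesis unfolding w_d2 by simp
qed

lemma w_le: "wfun V t \<le> (\<bar>t\<bar> + \<bar>R\<bar>) * measure lborel V"
proof -
  have "wfun V t \<le> (LINT r|lborel. (\<bar>t\<bar> + \<bar>R\<bar>) * indicator V r)"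
    unfolding wfun_def
  proof (rule Bochner_Integration.integral_mono[OF w_int])
    show "integrable lborel (\<lambda>r. (\<bar>t\<bar> + \<bar>R\<bar>) * indicator V r :: real)"
      using V_sets V_fin by (intro integrable_mult_right) auto
    fix r show "indicator V r * max 0 (t - r) \<le> (\<bar>t\<bar> + \<bar>R\<bar>) * indicator V r"
      using rV[of r] by (auto simp: indicator_def max_def)
  qed
  then show ?thesis by simp
qed

lemma w_lip: "\<bar>wfun V t - wfun V s\<bar> \<le> \<bar>t - s\<bar> * measure lborel V"
proof -
  have "wfun V t - wfun V s = (LINT r|lborel. indicator V r * max 0 (t - r) - indicator V r * max 0 (s - r))"
    unfolding wfun_def using w_int[of t] w_int[of s] by simp
  also have "\<bar>\<dots>\<bar> \<le> (LINT r|lborel. \<bar>indicator V r * max 0 (t - r) - indicator V r * max 0 (s - r)\<bar>)"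
    by (rule integral_abs_bound)
  also have "\<dots> \<le> (LINT r|lborel. \<bar>t - s\<bar> * indicator V r)"
  proof (rule Bochner_Integration.integral_mono)
    show "integrable lborel (\<lambda>r. \<bar>indicator V r * max 0 (t - r) - indicator V r * max 0 (s - r)\<bar>)"
      using w_int[of t] w_int[of s] by auto
    show "integrable lborel (\<lambda>r. \<bar>t - s\<bar> * indicator V r :: real)"
      using V_sets V_fin by (intro integrable_mult_right) auto
    fix r show "\<bar>indicator V r * max 0 (t - r) - indicator V r * max 0 (s - r)\<bar> \<le> \<bar>t - s\<bar> * indicator V r"
      by (auto simp: indicator_def max_def)
  qed
  also have "\<dots> = \<bar>t - s\<bar> * measure lborel V" by simp
  finally show ?thesis .
qed

end


lemma small_open:
  assumes N: "N \<in> null_sets lborel" and e: "e > 0"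
  obtains U where "open U" "N \<subseteq> U" "measure lborel U < e" "emeasure lborel U < \<infinity>"
proof -
  have Nb: "N \<in> sets borel" using N by (simp add: null_sets_def)
  obtain U where U: "open U" "N \<subseteq> U" "emeasure lborel (U - N) < e"
    using outer_regular_lborel[OF Nb e] by blast
  have "U = (U - N) \<union> N" using U(2) by auto
  then have "emeasure lborel U = emeasure lborel (U - N)"
    using N U(1) Nb by (metis emeasure_Un_null_set sets.Diff sets_lborel borel_open)
  then have eU: "emeasure lborel U < ennreal e" using U(3) by simp
  then have fin: "emeasure lborel U \<noteq> top" using top.not_eq_extremum by fastforce
  have "ennreal (measure lborel U) < ennreal e" using eU emeasure_eq_ennreal_measure[OF fin] by simp
  then have "measure lborel U < e" by (simp add: ennreal_less_iff)
  then show ?thesis using that U(1,2) fin by (simp add: top.not_eq_extremum)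
qed

definition d2 :: "(real \<Rightarrow> real) \<Rightarrow> real \<Rightarrow> real \<Rightarrow> real" where
  "d2 f t h = f (t + h) + f (t - h) - 2 * f t"

lemma W_exists:
  assumes N: "N \<in> null_sets lborel"
  shows "\<exists>W. continuous_on UNIV W \<and> (\<forall>t h. h \<ge> 0 \<longrightarrow> d2 W t h \<ge> 0) \<and>
             (\<forall>t\<in>N. \<forall>K. \<forall>\<^sub>F h in at_right 0. K * h^2 \<le> d2 W t h)"
proof -
  define e where "e k = (1/2::real)^k / (real k + 1)" for k :: nat
  have epos: "e k > 0" for k by (simp add: e_def)
  have "\<forall>k. \<exists>U. open U \<and> N \<subseteq> U \<and> measure lborel U < e k \<and> emeasure lborel U < \<infinity>"
    using small_open[OF N epos] by metis
  then obtain U where U: "\<And>k. open (U k)" "\<And>k. N \<subseteq> U k" "\<And>k. measure lborel (U k) < e k"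
    "\<And>k. emeasure lborel (U k) < \<infinity>"
    by metis
  define V where "V k = U k \<inter> {-(real k + 1)<..<real k + 1}" for k
  have Vo: "open (V k)" for k using U(1) by (simp add: V_def open_Int)
  have VR: "V k \<subseteq> {-(real k + 1)<..<real k + 1}" for k by (auto simp: V_def)
  have mV: "measure lborel (V k) \<le> e k" for k
  proof -
    have "measure lborel (V k) \<le> measure lborel (U k)"
      by (rule measure_mono_fmeasurable) (use U(1,4) Vo in \<open>auto simp: V_def fmeasurable_def\<close>)
    then show ?thesis using U(3)[of k] by linarith
  qed
  have mV2: "measure lborel (V k) \<le> (1/2)^k" for k
  proof -
    have "(1/2::real)^k / (real k + 1) \<le> (1/2)^k / 1" by (intro divide_left_mono) auto
    then have "e k \<le> (1/2)^k" unfolding e_def by simp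
    then show ?thesis using mV[of k] by linarith
  qed
  define w where "w k t = wfun (V k) t" for k t
  have wnn: "0 \<le> w k t" for k t unfolding w_def by (rule w_nonneg[OF Vo VR])
  have wle: "w k t \<le> (\<bar>t\<bar> + 1) * (1/2)^k" for k t
  proof -
    have "w k t \<le> (\<bar>t\<bar> + \<bar>real k + 1\<bar>) * measure lborel (V k)"
      unfolding w_def by (rule w_le[OF Vo VR])
    also have "\<dots> \<le> (\<bar>t\<bar> + (real k + 1)) * e k"
      using mV[of k] by (intro mult_mono) auto
    also have "\<dots> = ((\<bar>t\<bar> + (real k + 1)) / (real k + 1)) * (1/2)^k"
      unfolding e_def by (simp add: field_simps)
    also have "\<dots> \<le> (\<bar>t\<bar> + 1) * (1/2)^k"
    proof (intro mult_right_mono)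
      have "\<bar>t\<bar> + (real k + 1) \<le> (\<bar>t\<bar> + 1) * (real k + 1)" by (simp add: algebra_simps)
      then show "(\<bar>t\<bar> + (real k + 1)) / (real k + 1) \<le> \<bar>t\<bar> + 1"
        by (simp add: divide_le_eq)
    qed simp
    finally show ?thesis .
  qed
  have wsum: "summable (\<lambda>k. w k t)" for t
    by (rule summable_comparison_test[OF _ summable_mult[OF summable_geometric[of "1/2"], of "\<bar>t\<bar> + 1"]])
       (use wnn wle in auto)
  define W where "W t = (\<Sum>k. w k t)" for t
  have sW: "(\<lambda>k. w k t) sums W t" for t using wsum[of t] unfolding W_def by (simp add: summable_sums)
  have lip: "\<bar>W t - W s\<bar> \<le> 2 * \<bar>t - s\<bar>" for t s
  proof -
    have "(\<lambda>k. w k t - w k s) sums (W t - W s)" by (rule sums_diff[OF sW sW])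
    moreover have l: "\<bar>w k t - w k s\<bar> \<le> \<bar>t - s\<bar> * (1/2)^k" for k
    proof -
      have "\<bar>w k t - w k s\<bar> \<le> \<bar>t - s\<bar> * measure lborel (V k)"
        unfolding w_def by (rule w_lip[OF Vo VR])
      also have "\<dots> \<le> \<bar>t - s\<bar> * (1/2)^k" by (intro mult_left_mono mV2) auto
      finally show ?thesis .
    qed
    have sg: "(\<lambda>k. \<bar>t - s\<bar> * (1/2::real)^k) sums (\<bar>t - s\<bar> * 2)"
      using sums_mult[OF geometric_sums[of "1/2::real"], of "\<bar>t - s\<bar>"] by simp
    have sa: "summable (\<lambda>k. \<bar>w k t - w k s\<bar>)"
      by (rule summable_comparison_test[OF _ sums_summable[OF sg]]) (use l in auto)
    ultimately have "\<bar>W t - W s\<bar> \<le> (\<Sum>k. \<bar>w k t - w k s\<bar>)"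
      using summable_norm[of "\<lambda>k. w k t - w k s"] sums_unique by fastforce
    also have "\<dots> \<le> \<bar>t - s\<bar> * 2"
      using sums_le[OF l summable_sums[OF sa] sg] .
    finally show ?thesis by simp
  qed
  have cont: "continuous_on UNIV W"
    unfolding continuous_on_iff
  proof (intro ballI allI impI)
    fix x :: real and \<epsilon> :: real assume "\<epsilon> > 0"
    then show "\<exists>d>0. \<forall>x'\<in>UNIV. dist x' x < d \<longrightarrow> dist (W x') (W x) < \<epsilon>"
    proof (intro exI[of _ "\<epsilon>/2"] conjI ballI impI)
      fix x' :: real assume "dist x' x < \<epsilon>/2"
      then show "dist (W x') (W x) < \<epsilon>" using lip[of x' x] by (simp add: dist_real_def)
    qed (use \<open>\<epsilon> > 0\<close> in simp)
  qed
  have sd2: "(\<lambda>k. d2 (w k) t h) sums d2 W t h" for t h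
    unfolding d2_def by (intro sums_diff sums_add sums_mult sW)
  have d2nn: "d2 (w k) t h \<ge> 0" if "h \<ge> 0" for k t h
    unfolding d2_def w_def by (rule w_d2_nonneg[OF Vo VR that])
  have pos: "h \<ge> 0 \<longrightarrow> d2 W t h \<ge> 0" for t h
    using sums_le[of "\<lambda>k. 0" "\<lambda>k. d2 (w k) t h" 0 "d2 W t h"] sd2[of t h] d2nn by auto
  have big: "\<forall>\<^sub>F h in at_right 0. K * h^2 \<le> d2 W t h" if t: "t \<in> N" for t K
  proof -
    define k0 where "k0 = nat \<lceil>\<bar>t\<bar>\<rceil>"
    define n where "n = nat \<lceil>2 * K\<rceil>"
    define I where "I = {k0..<k0+n}"
    have tV: "t \<in> V k" if "k \<in> I" for k
    proof -
      have "\<bar>t\<bar> \<le> real k0" unfolding k0_def by linarith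
      also have "\<dots> \<le> real k" using that by (simp add: I_def)
      finally show ?thesis using U(2)[of k] t by (auto simp: V_def)
    qed
    have ev1: "\<forall>\<^sub>F h in at_right 0. h^2 / 2 \<le> d2 (w k) t h" if k: "k \<in> I" for k
    proof -
      obtain \<delta> where d: "\<delta> > 0" "ball t \<delta> \<subseteq> V k"
        using Vo[of k] tV[OF k] open_contains_ball by blast
      show ?thesis unfolding eventually_at_right_field
      proof (intro exI[of _ \<delta>] conjI allI impI)
        fix h :: real assume h: "0 < h" "h < \<delta>"
        have "{t - h/2..t + h/2} \<subseteq> ball t \<delta>"
          using h by (auto simp: ball_def dist_real_def)
        then have "{t - h/2..t + h/2} \<subseteq> V k" using d(2) by blast
        then show "h^2 / 2 \<le> d2 (w k) t h"
          unfolding d2_def w_def by (rule w_d2_big[OF Vo VR h(1)])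
      qed (use d in auto)
    qed
    have evI: "\<forall>\<^sub>F h in at_right 0. \<forall>k\<in>I. h^2 / 2 \<le> d2 (w k) t h"
      by (rule eventually_ball_finite) (use ev1 in \<open>auto simp: I_def\<close>)
    moreover have "\<forall>\<^sub>F h in at_right (0::real). h > 0"
      by (simp add: eventually_at_right_less)
    ultimately show ?thesis
    proof eventually_elim
      case (elim h)
      have "K * h^2 \<le> real n * (h^2 / 2)"
      proof -
        have "2 * K \<le> real n" unfolding n_def by linarith
        then have "K \<le> real n / 2" by simp
        then show ?thesis using elim by (simp add: mult_right_mono)
      qed
      also have "\<dots> = (\<Sum>k\<in>I. h^2 / 2)" by (simp add: I_def)
      also have "\<dots> \<le> (\<Sum>k\<in>I. d2 (w k) t h)" using elim by (intro sum_mono) auto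
      also have "\<dots> \<le> (\<Sum>k. d2 (w k) t h)"
        by (rule sum_le_suminf) (use sd2[of t h] d2nn elim in \<open>auto simp: sums_iff I_def\<close>)
      also have "\<dots> = d2 W t h" using sd2[of t h] by (simp add: sums_iff)
      finally show ?case .
    qed
  qed
  show ?thesis using cont pos big by blast
qed


lemma max_principle:
  fixes g :: "real \<Rightarrow> real"
  assumes cont: "continuous_on {a..b} g"
    and freq: "\<And>t \<delta>. t \<in> {a<..<b} \<Longrightarrow> \<delta> > 0 \<Longrightarrow> \<exists>h. 0 < h \<and> h < \<delta> \<and> d2 g t h < 0"
    and x: "a \<le> x - h" "x + h \<le> b" "h > 0"
  shows "d2 g x h \<le> 0"
proof (rule ccontr)
  assume neg: "\<not> d2 g x h \<le> 0"
  define p where "p = x - h"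
  define q where "q = x + h"
  have pq: "p < q" using x by (simp add: p_def q_def)
  define l where "l t = g p + (g q - g p) * (t - p) / (q - p)" for t
  define \<phi> where "\<phi> t = g t - l t" for t
  have sub: "{p..q} \<subseteq> {a..b}" using x by (auto simp: p_def q_def)
  have contphi: "continuous_on {p..q} \<phi>"
    unfolding \<phi>_def l_def by (intro continuous_intros continuous_on_subset[OF cont sub]) (use pq in auto)
  obtain t0 where t0: "t0 \<in> {p..q}" "\<And>t. t \<in> {p..q} \<Longrightarrow> \<phi> t0 \<le> \<phi> t"
    using continuous_attains_inf[OF compact_Icc _ contphi] pq by fastforce
  have lx: "l x = (g p + g q) / 2"
    unfolding l_def using pq by (simp add: p_def q_def field_simps)
  have phix: "\<phi> x < 0" using neg unfolding \<phi>_def lx d2_def by (simp add: p_def q_def)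
  have "x \<in> {p..q}" using x by (simp add: p_def q_def)
  then have phit0: "\<phi> t0 < 0" using t0(2) phix by fastforce
  have "\<phi> p = 0" "\<phi> q = 0" unfolding \<phi>_def l_def using pq by auto
  then have t0in: "p < t0" "t0 < q" using t0(1) phit0 by (auto simp: order.order_iff_strict)
  then have "t0 \<in> {a<..<b}" using x by (auto simp: p_def q_def)
  then obtain s where s: "0 < s" "s < min (t0 - p) (q - t0)" "d2 g t0 s < 0"
    using freq[of t0 "min (t0 - p) (q - t0)"] t0in by auto
  have "\<phi> t0 \<le> \<phi> (t0 + s)" "\<phi> t0 \<le> \<phi> (t0 - s)" using t0(2) s t0in by auto
  moreover have "l (t0 + s) + l (t0 - s) - 2 * l t0 = 0"
  proof -
    define m where "m = (g q - g p) / (q - p)"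
    have le: "l t = g p + m * (t - p)" for t by (simp add: l_def m_def)
    show ?thesis unfolding le by (simp add: algebra_simps)
  qed
  ultimately have "d2 g t0 s \<ge> 0" unfolding d2_def \<phi>_def by linarith
  then show False using s(3) by simp
qed

lemma ev_small:
  assumes "\<forall>\<^sub>F h in at_right (0::real). P h" "\<delta> > 0"
  shows "\<exists>h. 0 < h \<and> h < \<delta> \<and> P h"
proof -
  obtain b where b: "b > 0" "\<And>y. 0 < y \<Longrightarrow> y < b \<Longrightarrow> P y"
    using assms(1) unfolding eventually_at_right_field by auto
  show ?thesis using b assms(2) by (intro exI[of _ "min b \<delta> / 2"]) auto
qed

lemma d2_quad: "d2 (\<lambda>t. t^2 / 2) t h = h^2"
  unfolding d2_def by (simp add: power2_eq_square field_simps)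

lemma upper_bound_d2:
  fixes F :: "real \<Rightarrow> real"
  assumes contF: "continuous_on {a..b} F"
    and lim: "\<And>t. t \<in> {a<..<b} \<Longrightarrow> ((\<lambda>h. d2 F t h / h^2) \<longlongrightarrow> L t) (at_right 0)"
    and N: "N \<in> null_sets lborel"
    and bnd: "\<And>t. t \<in> {a<..<b} \<Longrightarrow> t \<notin> N \<Longrightarrow> L t \<le> C"
    and x: "a \<le> x - h" "x + h \<le> b" "h > 0"
  shows "d2 F x h \<le> C * h^2"
proof -
  obtain W where W: "continuous_on UNIV W" "\<And>t h. h \<ge> 0 \<Longrightarrow> d2 W t h \<ge> 0"
    "\<And>t K. t \<in> N \<Longrightarrow> \<forall>\<^sub>F h in at_right 0. K * h^2 \<le> d2 W t h"
    using W_exists[OF N] by blast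
  have main: "d2 F x h \<le> C * h^2 + \<epsilon> * (d2 W x h + h^2)" if e: "\<epsilon> > 0" for \<epsilon>
  proof -
    define g where "g t = F t - C * (t^2/2) - \<epsilon> * W t - \<epsilon> * (t^2/2)" for t
    have dg: "d2 g t s = d2 F t s - C * s^2 - \<epsilon> * d2 W t s - \<epsilon> * s^2" for t s
      unfolding g_def d2_def power2_eq_square by (simp add: field_simps)
    have contg: "continuous_on {a..b} g"
      unfolding g_def by (intro continuous_intros contF continuous_on_subset[OF W(1)]) auto
    have freq: "\<exists>s. 0 < s \<and> s < \<delta> \<and> d2 g t s < 0" if t: "t \<in> {a<..<b}" and d: "\<delta> > 0" for t \<delta>
    proof (rule ev_small[OF _ d])
      have pos: "\<forall>\<^sub>F s in at_right (0::real). s > 0" by (simp add: eventually_at_right_less)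
      show "\<forall>\<^sub>F s in at_right 0. d2 g t s < 0"
      proof (cases "t \<in> N")
        case False
        have "\<forall>\<^sub>F s in at_right 0. d2 F t s / s^2 < L t + \<epsilon>/2"
          by (rule order_tendstoD(2)[OF lim[OF t]]) (use e in simp)
        with pos show ?thesis
        proof eventually_elim
          case (elim s)
          then have "d2 F t s < (L t + \<epsilon>/2) * s^2" by (simp add: divide_less_eq)
          moreover have "L t \<le> C" using bnd[OF t False] .
          moreover have "d2 W t s \<ge> 0" using W(2)[of s t] elim by simp
          moreover have "s^2 > 0" using elim by simp
          ultimately have "d2 F t s - C * s^2 - \<epsilon> * d2 W t s - \<epsilon> * s^2 < 0"
          proof -
            assume a1: "d2 F t s < (L t + \<epsilon>/2) * s^2" and a2: "L t \<le> C" and a3: "d2 W t s \<ge> 0" and a4: "s^2 > 0"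
            have "(L t + \<epsilon>/2) * s^2 \<le> (C + \<epsilon>/2) * s^2" using a2 a4 by (intro mult_right_mono) auto
            moreover have "\<epsilon> * d2 W t s \<ge> 0" using a3 e by simp
            moreover have "(C + \<epsilon>/2) * s^2 = C * s^2 + \<epsilon>/2 * s^2" by (simp add: algebra_simps)
            moreover have "\<epsilon> * s^2 > 0" using e a4 by simp
            ultimately show ?thesis using a1 by linarith
          qed
          then show ?case unfolding dg .
        qed
      next
        case True
        define K where "K = (\<bar>L t\<bar> + \<bar>C\<bar> + 1) / \<epsilon>"
        have "\<forall>\<^sub>F s in at_right 0. d2 F t s / s^2 < L t + 1"
          by (rule order_tendstoD(2)[OF lim[OF t]]) simp
        with pos W(3)[OF True, of K] show ?thesis
        proof eventually_elim
          case (elim s)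
          then have a: "d2 F t s < (L t + 1) * s^2" by (simp add: divide_less_eq)
          have "\<epsilon> * K = \<bar>L t\<bar> + \<bar>C\<bar> + 1" unfolding K_def using e by simp
          have "\<epsilon> * (K * s^2) \<le> \<epsilon> * d2 W t s" using elim e by (intro mult_left_mono) auto
          then have b: "\<epsilon> * d2 W t s \<ge> (\<bar>L t\<bar> + \<bar>C\<bar> + 1) * s^2"
            using \<open>\<epsilon> * K = _\<close> by (simp add: mult.assoc[symmetric])
          have "(L t + 1 - C) * s^2 \<le> (\<bar>L t\<bar> + \<bar>C\<bar> + 1) * s^2"
            by (intro mult_right_mono) auto
          then have "(L t + 1) * s^2 - C * s^2 \<le> (\<bar>L t\<bar> + \<bar>C\<bar> + 1) * s^2"
            by (simp add: algebra_simps)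
          moreover have "\<epsilon> * s^2 > 0" using e elim by simp
          ultimately have "d2 F t s - C * s^2 - \<epsilon> * d2 W t s - \<epsilon> * s^2 < 0"
            using a b by linarith
          then show ?case unfolding dg .
        qed
      qed
    qed
    have "d2 g x h \<le> 0" by (rule max_principle[OF contg freq x]) auto
    then show ?thesis unfolding dg by (simp add: algebra_simps)
  qed
  have Wp: "d2 W x h + h^2 > 0" using W(2)[of h x] x by (simp add: add_nonneg_pos)
  show ?thesis
  proof (rule field_le_epsilon)
    fix e :: real assume e: "e > 0"
    have "d2 F x h \<le> C * h^2 + (e / (d2 W x h + h^2)) * (d2 W x h + h^2)"
      by (rule main) (use e Wp in simp)
    then show "d2 F x h \<le> C * h^2 + e" using Wp by simp
  qed
qed


lemma ftc01:
  fixes A f :: "real \<Rightarrow> real"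
  assumes "\<And>x. (A has_real_derivative f x) (at x)"
  shows "(f has_integral (A 1 - A 0)) {0..1}"
  by (rule fundamental_theorem_of_calculus)
     (auto simp: has_real_derivative_iff_has_vector_derivative[symmetric] intro: has_field_derivative_at_within assms)

lemma sin_orth:
  assumes n: "n \<ge> 1"
  shows "((\<lambda>x. sin (real m * pi * x) * sin (real n * pi * x)) has_integral (if m = n then 1/2 else 0)) {0..1}"
proof (cases "m = n")
  case True
  define c where "c = 1 / (4 * real n * pi)"
  define k where "k = 2 * real n * pi"
  define A where "A x = x / 2 - c * sin (k * x)" for x
  have "(A has_real_derivative sin (real m * pi * x) * sin (real n * pi * x)) (at x)" for x
  proof -
    have "(A has_real_derivative 1/2 - c * (cos (k * x) * k)) (at x)"
      unfolding A_def by (auto intro!: derivative_eq_intros)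
    moreover have "1/2 - c * (cos (k * x) * k) = sin (real n * pi * x)^2"
    proof -
      have "cos (2 * real n * pi * x) = 1 - 2 * sin (real n * pi * x)^2"
        using cos_double_sin[of "real n * pi * x"] by (simp add: mult_ac)
      then show ?thesis using n unfolding c_def k_def by (simp add: field_simps)
    qed
    ultimately show ?thesis using True by (simp add: power2_eq_square)
  qed
  from ftc01[OF this] have "((\<lambda>x. sin (real m * pi * x) * sin (real n * pi * x)) has_integral (A 1 - A 0)) {0..1}" .
  moreover have "A 1 - A 0 = 1/2"
  proof -
    have "sin (k * 1) = 0" using sin_npi[of "2 * n"] unfolding k_def by (simp add: mult_ac)
    then show ?thesis by (simp add: A_def)
  qed
  ultimately show ?thesis using True by simp
next
  case False
  define k1 where "k1 = (real m - real n) * pi"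
  define k2 where "k2 = (real m + real n) * pi"
  define c1 where "c1 = 1 / (2 * k1)"
  define c2 where "c2 = 1 / (2 * k2)"
  define A where "A x = c1 * sin (k1 * x) - c2 * sin (k2 * x)" for x
  have mn: "real m - real n \<noteq> 0" "real m + real n \<noteq> 0" using False n by auto
  have "(A has_real_derivative sin (real m * pi * x) * sin (real n * pi * x)) (at x)" for x
  proof -
    have "(A has_real_derivative c1 * (cos (k1 * x) * k1) - c2 * (cos (k2 * x) * k2)) (at x)"
      unfolding A_def by (auto intro!: derivative_eq_intros)
    moreover have "c1 * (cos (k1 * x) * k1) - c2 * (cos (k2 * x) * k2)
         = sin (real m * pi * x) * sin (real n * pi * x)"
    proof -
      define a where "a = real m * pi * x"
      define b where "b = real n * pi * x"
      have e: "k1 * x = a - b" "k2 * x = a + b" by (simp_all add: k1_def k2_def a_def b_def algebra_simps)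
      have c: "c1 * k1 = 1/2" "c2 * k2 = 1/2" using mn by (simp_all add: c1_def c2_def k1_def k2_def)
      have "c1 * (cos (k1 * x) * k1) - c2 * (cos (k2 * x) * k2) = (c1 * k1) * cos (a - b) - (c2 * k2) * cos (a + b)"
        unfolding e by (simp add: mult_ac)
      also have "\<dots> = sin a * sin b" unfolding c cos_diff cos_add by (simp add: algebra_simps)
      finally show ?thesis by (simp add: a_def b_def)
    qed
    ultimately show ?thesis by simp
  qed
  from ftc01[OF this] have "((\<lambda>x. sin (real m * pi * x) * sin (real n * pi * x)) has_integral (A 1 - A 0)) {0..1}" .
  moreover have "A 1 - A 0 = 0"
  proof -
    have "sin (k1 * 1) = 0" "sin (k2 * 1) = 0"
      by (simp_all add: k1_def k2_def algebra_simps sin_diff sin_add)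
    then show ?thesis by (simp add: A_def)
  qed
  ultimately show ?thesis using False by simp
qed

lemma bessel:
  fixes \<gamma> :: "nat \<Rightarrow> real"
  assumes sg: "summable (\<lambda>m. \<bar>\<gamma> m\<bar>)"
    and bnd: "\<And>x. x \<in> {0..1} \<Longrightarrow> \<bar>\<Sum>m. \<gamma> m * sin (real m * pi * x)\<bar> \<le> B"
  shows "(\<Sum>m\<in>{1..M}. (\<gamma> m)^2) \<le> 2 * B^2"
proof -
  define s where "s m x = sin (real m * pi * x)" for m x
  define G where "G x = (\<Sum>m. \<gamma> m * s m x)" for x
  have sab: "summable (\<lambda>m. \<gamma> m * s m x)" for x
    by (rule summable_comparison_test[OF _ sg]) (auto simp: s_def abs_mult intro!: mult_left_le)
  have ul: "uniform_limit {0..1} (\<lambda>k x. \<Sum>m<k. \<gamma> m * s m x) G sequentially"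
    unfolding G_def by (rule Weierstrass_m_test[OF _ sg]) (auto simp: s_def abs_mult intro!: mult_left_le)
  have contG: "continuous_on {0..1} G"
    by (rule uniform_limit_theorem[OF _ ul]) (auto simp: s_def intro!: continuous_intros always_eventually)
  have coef: "((\<lambda>x. G x * s n x) has_integral \<gamma> n / 2) {0..1}" if n: "n \<ge> 1" for n
  proof -
    have ul2: "uniform_limit {0..1} (\<lambda>k x. \<Sum>m<k. \<gamma> m * (s m x * s n x)) (\<lambda>x. \<Sum>m. \<gamma> m * (s m x * s n x)) sequentially"
    proof (rule Weierstrass_m_test[OF _ sg])
      fix m x
      have "\<bar>s m x * s n x\<bar> \<le> 1" by (simp add: s_def abs_mult mult_le_one)
      then show "norm (\<gamma> m * (s m x * s n x)) \<le> \<bar>\<gamma> m\<bar>"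
        by (simp add: abs_mult mult_left_le)
    qed
    have eqG: "(\<Sum>m. \<gamma> m * (s m x * s n x)) = G x * s n x" for x
      unfolding G_def using suminf_mult2[OF sab[of x], of "s n x"] by (simp add: mult_ac)
    obtain I J where IJ: "\<And>k. ((\<lambda>x. \<Sum>m<k. \<gamma> m * (s m x * s n x)) has_integral I k) {0..1}"
      "((\<lambda>x. \<Sum>m. \<gamma> m * (s m x * s n x)) has_integral J) {0..1}" "I \<longlonglongrightarrow> J"
      by (rule uniform_limit_integral[OF ul2]) (auto simp: s_def intro!: continuous_intros)
    have Ik: "I k = (\<Sum>m<k. \<gamma> m * (if m = n then 1/2 else 0))" for k
    proof -
      have "((\<lambda>x. \<Sum>m<k. \<gamma> m * (s m x * s n x)) has_integral (\<Sum>m<k. \<gamma> m * (if m = n then 1/2 else 0))) {0..1}"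
      proof (intro has_integral_sum has_integral_mult_right)
        fix m show "((\<lambda>x. s m x * s n x) has_integral (if m = n then 1/2 else 0)) {0..1}"
          unfolding s_def by (rule sin_orth[OF n])
      qed simp
      then show ?thesis using IJ(1) has_integral_unique by blast
    qed
    have "I \<longlonglongrightarrow> \<gamma> n / 2"
    proof (rule tendsto_eventually)
      show "\<forall>\<^sub>F k in sequentially. I k = \<gamma> n / 2"
      proof (rule eventually_sequentiallyI[of "Suc n"])
        fix k assume "Suc n \<le> k"
        then have "n \<in> {..<k}" by simp
        then show "I k = \<gamma> n / 2" unfolding Ik
          by (simp add: if_distrib[of "\<lambda>t. _ * t"] sum.delta' cong: if_cong)
      qed
    qed
    then have "J = \<gamma> n / 2" using IJ(3) LIMSEQ_unique by blast
    with IJ(2) show ?thesis unfolding eqG by simp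
  qed
  define P where "P x = (\<Sum>m\<in>{1..M}. \<gamma> m * s m x)" for x
  define S where "S = (\<Sum>m\<in>{1..M}. (\<gamma> m)^2)"
  have S2: "(\<Sum>m\<in>{1..M}. \<gamma> m * (\<gamma> m / 2)) = S / 2"
    unfolding S_def by (simp add: power2_eq_square sum_divide_distrib)
  have GP: "((\<lambda>x. G x * P x) has_integral S / 2) {0..1}"
  proof -
    have "((\<lambda>x. \<Sum>m\<in>{1..M}. \<gamma> m * (G x * s m x)) has_integral (\<Sum>m\<in>{1..M}. \<gamma> m * (\<gamma> m / 2))) {0..1}"
      by (intro has_integral_sum has_integral_mult_right coef) auto
    moreover have eq: "G x * P x = (\<Sum>m\<in>{1..M}. \<gamma> m * (G x * s m x))" for x
      unfolding P_def by (simp add: sum_distrib_left mult_ac)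
    ultimately show ?thesis unfolding S2[symmetric] by (simp only: eq)
  qed
  have PP: "((\<lambda>x. P x * P x) has_integral S / 2) {0..1}"
  proof -
    have inner: "((\<lambda>x. \<Sum>n\<in>{1..M}. \<gamma> n * (s m x * s n x)) has_integral \<gamma> m / 2) {0..1}"
      if m: "m \<in> {1..M}" for m
    proof -
      have "((\<lambda>x. \<Sum>n\<in>{1..M}. \<gamma> n * (s m x * s n x)) has_integral (\<Sum>n\<in>{1..M}. \<gamma> n * (if m = n then 1/2 else 0))) {0..1}"
      proof (intro has_integral_sum has_integral_mult_right)
        fix n assume "n \<in> {1..M}"
        then have n: "n \<ge> 1" by simp
        show "((\<lambda>x. s m x * s n x) has_integral (if m = n then 1/2 else 0)) {0..1}"
          unfolding s_def by (rule sin_orth[OF n])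
      qed simp
      moreover have e: "(\<Sum>n\<in>{1..M}. \<gamma> n * (if m = n then 1/2 else 0)) = \<gamma> m / 2"
        using m by (simp add: if_distrib[of "\<lambda>t. _ * t"] sum.delta cong: if_cong)
      ultimately show ?thesis by (simp only: e)
    qed
    have "((\<lambda>x. \<Sum>m\<in>{1..M}. \<gamma> m * (\<Sum>n\<in>{1..M}. \<gamma> n * (s m x * s n x))) has_integral (\<Sum>m\<in>{1..M}. \<gamma> m * (\<gamma> m / 2))) {0..1}"
      by (intro has_integral_sum has_integral_mult_right inner) auto
    moreover have eq: "P x * P x = (\<Sum>m\<in>{1..M}. \<gamma> m * (\<Sum>n\<in>{1..M}. \<gamma> n * (s m x * s n x)))" for x
      unfolding P_def by (simp add: sum_distrib_left sum_distrib_right mult_ac)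
    ultimately show ?thesis unfolding S2[symmetric] by (simp only: eq)
  qed
  have contP: "continuous_on {0..1} P" unfolding P_def s_def by (intro continuous_intros)
  have intGG: "(\<lambda>x. G x * G x) integrable_on {0..1}"
    by (rule integrable_continuous_interval) (intro continuous_intros contG)
  have GGle: "integral {0..1} (\<lambda>x. G x * G x) \<le> B^2"
  proof -
    have "integral {0..1} (\<lambda>x. G x * G x) \<le> integral {0..1} (\<lambda>x::real. B^2)"
    proof (rule Henstock_Kurzweil_Integration.integral_le[OF intGG])
      show "(\<lambda>x::real. B^2) integrable_on {0..1}" by (rule integrable_continuous_interval) simp
      fix x :: real assume x: "x \<in> {0..1}"
      have "\<bar>G x\<bar> \<le> B" using bnd[OF x] unfolding G_def s_def .
      then have "\<bar>G x\<bar> * \<bar>G x\<bar> \<le> B * B" by (intro mult_mono) auto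
      then show "G x * G x \<le> B^2" by (simp add: power2_eq_square abs_mult[symmetric])
    qed
    then show ?thesis by simp
  qed
  have "S / 2 \<le> integral {0..1} (\<lambda>x. (G x * G x + P x * P x) / 2)"
  proof -
    have "integral {0..1} (\<lambda>x. G x * P x) \<le> integral {0..1} (\<lambda>x. (G x * G x + P x * P x) / 2)"
    proof (rule Henstock_Kurzweil_Integration.integral_le)
      show "(\<lambda>x. G x * P x) integrable_on {0..1}" using GP by blast
      show "(\<lambda>x. (G x * G x + P x * P x) / 2) integrable_on {0..1}"
        by (rule integrable_continuous_interval) (intro continuous_intros contG contP; simp)
      fix x :: real
      have "0 \<le> (G x - P x) * (G x - P x)" by simp
      then show "G x * P x \<le> (G x * G x + P x * P x) / 2" by (simp add: algebra_simps)
    qed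
    then show ?thesis using integral_unique[OF GP] by simp
  qed
  also have "\<dots> = (integral {0..1} (\<lambda>x. G x * G x) + S / 2) / 2"
  proof -
    have "((\<lambda>x. (G x * G x + P x * P x) / 2) has_integral (integral {0..1} (\<lambda>x. G x * G x) + S / 2) / 2) {0..1}"
      using has_integral_divide[OF has_integral_add[OF integrable_integral[OF intGG] PP], of 2] by simp
    then show ?thesis by (rule integral_unique)
  qed
  finally have "S / 2 \<le> integral {0..1} (\<lambda>x. G x * G x)" by simp
  with GGle show ?thesis unfolding S_def by simp
qed


lemma part_i:
  fixes q :: real
  assumes q: "q > 1"
  shows "pointwise_wd (\<lambda>m. real m powr (1 / q))"
    and "\<And>p. p > q \<Longrightarrow> inv_in_lp (\<lambda>m. real m powr (1 / q)) p"
proof -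
  define v where "v m = real m powr (1/q) * (sqrt 2 / (pi * real m))" for m :: nat
  have v_eq: "v m = sqrt 2 / pi * real m powr (1/q - 1)" for m
  proof (cases "m = 0")
    case True then show ?thesis by (simp add: v_def)
  next
    case False
    then have "real m powr (1/q - 1) = real m powr (1/q) / real m"
      by (simp add: powr_diff)
    then show ?thesis by (simp add: v_def)
  qed
  have e: "1/q - 1 < 0" using q by (simp add: field_simps)
  have v0: "v \<longlonglongrightarrow> 0"
  proof -
    have "(\<lambda>m. real m powr (1/q - 1)) \<longlonglongrightarrow> 0"
      by (rule tendsto_neg_powr[OF e filterlim_real_sequentially])
    from tendsto_mult[OF tendsto_const[of "sqrt 2 / pi"] this] show ?thesis
      by (simp add: v_eq[abs_def])
  qed
  have mono: "v (Suc (Suc m)) \<le> v (Suc m)" for m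
  proof -
    have "real (Suc (Suc m)) powr (1/q - 1) \<le> real (Suc m) powr (1/q - 1)"
      by (rule powr_mono2') (use e in auto)
    then show ?thesis unfolding v_eq by (intro mult_left_mono) auto
  qed
  have bv: "summable (\<lambda>m. \<bar>v m - v (Suc m)\<bar>)"
  proof -
    have "summable (\<lambda>m. v (Suc m) - v (Suc (Suc m)))"
      by (rule telescope_summable'[of _ 0]) (rule LIMSEQ_Suc[OF v0])
    moreover have "\<bar>v (Suc m) - v (Suc (Suc m))\<bar> = v (Suc m) - v (Suc (Suc m))" for m
      using mono[of m] by simp
    ultimately have "summable (\<lambda>m. \<bar>v (Suc m) - v (Suc (Suc m))\<bar>)"
      by simp
    then show ?thesis using summable_Suc_iff by blast
  qed
  show "pointwise_wd (\<lambda>m. real m powr (1 / q))"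
    unfolding pointwise_wd_def
  proof
    fix x :: real assume x: "x \<in> {0..1}"
    have kt: "kterm (\<lambda>m. real m powr (1 / q)) x m = sin (real m * (pi * x)) * v m" for m
      by (simp add: kterm_def v_def mult_ac)
    have "summable (\<lambda>m. sin (real m * (pi * x)) * v m)"
    proof (cases "x = 0 \<or> x = 1")
      case True
      then have "sin (real m * (pi * x)) = 0" for m by (auto simp: mult_ac)
      then show ?thesis by simp
    next
      case False
      with x have x01: "0 < x" "x < 1" by auto
      have s: "sin (pi * x / 2) > 0"
        by (rule sin_gt_zero) (use x01 in \<open>auto simp: field_simps\<close>)
      show ?thesis
        using abel_sums[OF sin_partial_bound[of "pi * x"] v0 bv] s
        by (auto simp: sums_iff)
    qed
    then show "summable (\<lambda>n. kterm (\<lambda>m. real m powr (1 / q)) x (Suc n))"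
      unfolding kt by (subst summable_Suc_iff)
  qed
  fix p :: real assume p: "p > q"
  have "summable (\<lambda>n. real n powr (- (p / q)))"
    using p q by (subst summable_real_powr_iff) (simp add: field_simps)
  then have "summable (\<lambda>n. real (Suc n) powr (- (p / q)))"
    by (subst summable_Suc_iff)
  moreover have "\<bar>1 / real (Suc n) powr (1 / q)\<bar> powr p = real (Suc n) powr (- (p / q))" for n
  proof -
    have "\<bar>1 / real (Suc n) powr (1 / q)\<bar> = real (Suc n) powr (- (1/q))"
      by (simp add: powr_minus_divide)
    also have "\<dots> powr p = real (Suc n) powr (- (p / q))"
      by (simp add: powr_powr)
    finally show ?thesis .
  qed
  ultimately show "inv_in_lp (\<lambda>m. real m powr (1 / q)) p"
    unfolding inv_in_lp_def by simp
qed


lemma trig_d2: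
  fixes A H :: real
  shows "sin (A + H) + sin (A - H) - 2 * sin A = -4 * sin (H/2)^2 * sin A"
proof -
  have c: "cos H = 1 - 2 * sin (H/2)^2" using cos_double_sin[of "H/2"] by simp
  show ?thesis by (simp add: sin_add sin_diff c algebra_simps)
qed

lemma series_d2:
  fixes \<beta> :: "nat \<Rightarrow> real"
  assumes sb: "summable (\<lambda>m. \<bar>\<beta> m\<bar>)"
  shows "(\<lambda>m. \<beta> m * (-4 * sin (real m * pi * h / 2)^2) * sin (real m * pi * x)) sums
     ((\<Sum>m. \<beta> m * sin (real m * pi * (x + h))) + (\<Sum>m. \<beta> m * sin (real m * pi * (x - h)))
       - 2 * (\<Sum>m. \<beta> m * sin (real m * pi * x)))"
proof -
  have s: "summable (\<lambda>m. \<beta> m * sin (real m * pi * y))" for y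
    by (rule summable_comparison_test[OF _ sb]) (auto simp: abs_mult intro!: mult_left_le)
  have "(\<lambda>m. \<beta> m * sin (real m * pi * (x + h)) + \<beta> m * sin (real m * pi * (x - h)) - 2 * (\<beta> m * sin (real m * pi * x)))
     sums ((\<Sum>m. \<beta> m * sin (real m * pi * (x + h))) + (\<Sum>m. \<beta> m * sin (real m * pi * (x - h)))
       - 2 * (\<Sum>m. \<beta> m * sin (real m * pi * x)))"
    by (intro sums_diff sums_add sums_mult summable_sums s)
  moreover have "\<beta> m * sin (real m * pi * (x + h)) + \<beta> m * sin (real m * pi * (x - h)) - 2 * (\<beta> m * sin (real m * pi * x))
      = \<beta> m * (-4 * sin (real m * pi * h / 2)^2) * sin (real m * pi * x)" for m
  proof -
    have e: "real m * pi * (x + h) = real m * pi * x + real m * pi * h"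
            "real m * pi * (x - h) = real m * pi * x - real m * pi * h"
      by (simp_all add: algebra_simps)
    have t: "sin (real m * pi * (x + h)) + sin (real m * pi * (x - h)) - 2 * sin (real m * pi * x)
        = -4 * sin (real m * pi * h / 2)^2 * sin (real m * pi * x)"
      unfolding e by (rule trig_d2)
    have "\<beta> m * sin (real m * pi * (x + h)) + \<beta> m * sin (real m * pi * (x - h)) - 2 * (\<beta> m * sin (real m * pi * x))
       = \<beta> m * (sin (real m * pi * (x + h)) + sin (real m * pi * (x - h)) - 2 * sin (real m * pi * x))"
      by (simp only: distrib_left right_diff_distrib mult.left_commute[of 2])
    also have "\<dots> = \<beta> m * (-4 * sin (real m * pi * h / 2)^2 * sin (real m * pi * x))" by (simp only: t)
    finally show ?thesis by (simp only: mult.assoc)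
  qed
  ultimately show ?thesis by simp
qed

lemma null_uminus:
  assumes N: "N \<in> null_sets lborel"
  shows "uminus -` N \<in> null_sets (lborel :: real measure)"
proof -
  have Nb: "N \<in> sets borel" using N by (simp add: null_sets_def)
  have "emeasure lborel (uminus -` N) = emeasure (distr lborel borel (uminus :: real \<Rightarrow> real)) N"
    using Nb by (subst emeasure_distr) auto
  also have "\<dots> = 0" using null_setsD1[OF N] by (simp add: lborel_distr_uminus)
  moreover have m: "(uminus :: real \<Rightarrow> real) \<in> borel_measurable borel" by measurable
  then have "uminus -` N \<in> sets borel" using measurable_sets[OF m Nb] by simp
  ultimately show ?thesis by (intro null_setsI) auto
qed

lemma null_plus:
  assumes N: "N \<in> null_sets lborel"
  shows "(\<lambda>x. c + x) -` N \<in> null_sets (lborel :: real measure)"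
proof -
  have Nb: "N \<in> sets borel" using N by (simp add: null_sets_def)
  have "emeasure lborel ((\<lambda>x. c + x) -` N) = emeasure (distr lborel borel ((+) c :: real \<Rightarrow> real)) N"
    using Nb by (subst emeasure_distr) auto
  also have "\<dots> = 0" using null_setsD1[OF N] by (simp add: lborel_distr_plus)
  moreover have m: "((+) c :: real \<Rightarrow> real) \<in> borel_measurable borel" by measurable
  then have "(\<lambda>x. c + x) -` N \<in> sets borel" using measurable_sets[OF m Nb] by simp
  ultimately show ?thesis by (intro null_setsI) auto
qed

lemma null_refl2:
  assumes N: "N \<in> null_sets lborel"
  shows "(\<lambda>x. 2 - x) -` N \<in> null_sets (lborel :: real measure)"
proof -
  have "(\<lambda>x. 2 - x) -` N = uminus -` ((\<lambda>x. 2 + x) -` N)" by auto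
  then show ?thesis using null_uminus[OF null_plus[OF N]] by simp
qed

lemma sin_half_lower:
  assumes y: "0 \<le> y" "y \<le> pi/3"
  shows "sin y \<ge> y / 2"
proof (cases "y = 0")
  case False
  then have y0: "0 < y" using y by simp
  have der: "\<And>t. 0 \<le> t \<Longrightarrow> t \<le> y \<Longrightarrow> ((\<lambda>t. sin t - t/2) has_real_derivative cos t - 1/2) (at t)"
    by (auto intro!: derivative_eq_intros)
  obtain z where z: "0 < z" "z < y" "(sin y - y/2) - (sin 0 - 0/2) = (y - 0) * (cos z - 1/2)"
    using MVT2[OF y0 der] by blast
  have "cos (pi/3) \<le> cos z"
    using z y pi_gt_zero by (subst cos_mono_le_eq) auto
  then have "cos z - 1/2 \<ge> 0" by (simp add: cos_60)
  then have "(y - 0) * (cos z - 1/2) \<ge> 0" using y0 by simp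
  then show ?thesis using z(3) by simp
qed simp

lemma ext_sym:
  fixes x :: real
  assumes x: "x \<in> {-1<..<2}"
  shows "\<exists>y\<in>{0..1}. \<exists>\<sigma>::real. (\<sigma> = 1 \<or> \<sigma> = -1) \<and> (x = y \<or> x = -y \<or> x = 2 - y) \<and>
           (\<forall>m::nat. sin (real m * pi * x) = \<sigma> * sin (real m * pi * y))"
proof -
  consider "x \<in> {0..1}" | "x < 0" | "x > 1" by fastforce
  then show ?thesis
  proof cases
    case 1 then show ?thesis by (intro bexI[of _ x] exI[of _ 1]) auto
  next
    case 2
    then show ?thesis using x by (intro bexI[of _ "-x"] exI[of _ "-1"]) auto
  next
    case 3
    have "sin (real m * pi * x) = - sin (real m * pi * (2 - x))" for m :: nat
    proof -
      have "real m * pi * (2 - x) = real (2 * m) * pi - real m * pi * x" by (simp add: algebra_simps)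
      then show ?thesis by (simp add: sin_diff)
    qed
    then show ?thesis using x 3 by (intro bexI[of _ "2 - x"] exI[of _ "-1"]) auto
  qed
qed

lemma part_ii:
  fixes \<tau> :: "nat \<Rightarrow> real" and p :: real
  assumes tpos: "\<forall>m\<ge>1. \<tau> m > 0" and p: "0 < p" "p \<le> 2" and lp: "inv_in_lp \<tau> p"
    and wd: "pointwise_wd \<tau>"
  shows "\<not> in_Linf_D (k_tau \<tau>)"
proof
  assume "in_Linf_D (k_tau \<tau>)"
  then obtain C where C: "AE x in lborel. x \<in> {0..1} \<longrightarrow> \<bar>k_tau \<tau> x\<bar> \<le> C"
    unfolding in_Linf_D_def by blast
  define c where "c m = \<tau> m * (sqrt 2 / (pi * real m))" for m
  have c0: "c 0 = 0" by (simp add: c_def)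
  have kt: "kterm \<tau> x m = c m * sin (real m * pi * x)" for x m by (simp add: kterm_def c_def)
  define a where "a x m = c m * sin (real m * pi * x)" for x m
  have sum01: "summable (a x)" if "x \<in> {0..1}" for x
  proof -
    have "summable (\<lambda>n. kterm \<tau> x (Suc n))" using wd that unfolding pointwise_wd_def by blast
    then have "summable (\<lambda>n. a x (Suc n))" unfolding kt a_def .
    then show ?thesis using summable_Suc_iff by blast
  qed
  have k01: "k_tau \<tau> x = (\<Sum>m. a x m)" if "x \<in> {0..1}" for x
    using suminf_split_head[OF sum01[OF that]] c0 unfolding k_tau_def kt a_def by simp
  define f where "f x = (\<Sum>m. a x m)" for x
  have ext: "\<exists>y\<in>{0..1}. \<exists>\<sigma>::real. (\<sigma> = 1 \<or> \<sigma> = -1) \<and> (x = y \<or> x = -y \<or> x = 2 - y) \<and>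
           summable (a x) \<and> f x = \<sigma> * f y" if x: "x \<in> {-1<..<2}" for x
  proof -
    obtain y \<sigma> where y: "y \<in> {0..1}" "\<sigma> = 1 \<or> \<sigma> = -1" "x = y \<or> x = -y \<or> x = 2 - y"
      "\<And>m::nat. sin (real m * pi * x) = \<sigma> * sin (real m * pi * y)"
      using ext_sym[OF x] by blast
    have ax: "a x = (\<lambda>m. \<sigma> * a y m)" using y(4) unfolding a_def by (auto simp: mult_ac)
    have "summable (a x)" unfolding ax by (intro summable_mult sum01 y(1))
    moreover have "f x = \<sigma> * f y" unfolding f_def ax by (rule suminf_mult[OF sum01[OF y(1)]])
    ultimately show ?thesis using y by blast
  qed
  have sumx: "summable (a x)" if "x \<in> {-1<..<2}" for x using ext[OF that] by blast
  have "c \<longlonglongrightarrow> 0"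
  proof (rule cantor_lebesgue, intro ballI)
    fix x :: real assume "x \<in> {0..1}"
    from summable_LIMSEQ_zero[OF sum01[OF this]] show "(\<lambda>m. c m * sin (real m * pi * x)) \<longlonglongrightarrow> 0"
      unfolding a_def .
  qed
  then obtain Bc where Bc: "Bc > 0" "\<And>m. \<bar>c m\<bar> \<le> Bc"
  proof -
    assume r: "\<And>Bc. 0 < Bc \<Longrightarrow> (\<And>m. \<bar>c m\<bar> \<le> Bc) \<Longrightarrow> thesis"
    have "Bseq c" using convergent_imp_Bseq[OF convergentI[OF \<open>c \<longlonglongrightarrow> 0\<close>]] .
    then show thesis by (rule BseqE) (use r in auto)
  qed
  define \<beta> where "\<beta> m = c m / (real m * pi)^2" for m
  have \<beta>b: "\<bar>\<beta> m\<bar> \<le> Bc * inverse (real m ^ 2)" for m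
  proof (cases "m = 0")
    case True then show ?thesis by (simp add: \<beta>_def)
  next
    case False
    have "(1::real) * 1 \<le> pi * pi" using pi_gt3 by (intro mult_mono) auto
    then have pi1: "pi^2 \<ge> (1::real)" by (simp add: power2_eq_square)
    have "\<bar>\<beta> m\<bar> = \<bar>c m\<bar> / (real m ^ 2 * pi^2)" by (simp add: \<beta>_def power_mult_distrib abs_div)
    also have "\<dots> \<le> Bc / (real m ^ 2 * 1)"
      using False Bc pi1 by (intro frac_le mult_left_mono) auto
    finally show ?thesis by (simp add: divide_inverse)
  qed
  have sb: "summable (\<lambda>m. \<bar>\<beta> m\<bar>)"
    by (rule summable_comparison_test[OF _ summable_mult[OF inverse_power_summable[of 2], of Bc]])
       (use \<beta>b in auto)
  define F where "F x = (\<Sum>m. \<beta> m * sin (real m * pi * x))" for x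
  have contF: "continuous_on UNIV F"
  proof -
    have ul: "uniform_limit UNIV (\<lambda>n x. \<Sum>i<n. \<beta> i * sin (real i * pi * x)) F sequentially"
      unfolding F_def by (rule Weierstrass_m_test[OF _ sb]) (auto simp: abs_mult intro!: mult_left_le)
    show ?thesis
      by (rule uniform_limit_theorem[OF _ ul]) (auto intro!: always_eventually continuous_intros)
  qed
  have sd2: "(\<lambda>m. \<beta> m * (-4 * sin (real m * pi * h / 2)^2) * sin (real m * pi * x)) sums d2 F x h" for x h
    using series_d2[OF sb, of h x] unfolding d2_def F_def .
  have d2eq: "d2 F x h / h^2 = - (\<Sum>m. a x m * rk (real m * (pi * h / 2)))" if h: "h > 0" for x h
  proof -
    have te: "\<beta> m * (-4 * sin (real m * pi * h / 2)^2) * sin (real m * pi * x) / h^2 = - (a x m * rk (real m * (pi * h / 2)))" for m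
    proof (cases "m = 0")
      case True then show ?thesis by (simp add: \<beta>_def a_def c0)
    next
      case False
      define y where "y = real m * (pi * h / 2)"
      have y0: "y \<noteq> 0" using False h by (simp add: y_def)
      have sy: "sin (real m * pi * h / 2) = sin y" by (simp add: y_def mult_ac)
      have "\<beta> m * (-4 * sin y ^ 2) * sin (real m * pi * x) / h^2 = - (c m * sin (real m * pi * x) * (sin y / y)^2)"
        using False h unfolding \<beta>_def y_def by (simp add: field_simps power2_eq_square)
      then show ?thesis unfolding sy a_def rk_def using y0 by (simp add: y_def)
    qed
    have "(\<lambda>m. \<beta> m * (-4 * sin (real m * pi * h / 2)^2) * sin (real m * pi * x) / h^2) sums (d2 F x h / h^2)"
      by (rule sums_divide[OF sd2])
    then have "(\<lambda>m. - (a x m * rk (real m * (pi * h / 2)))) sums (d2 F x h / h^2)" unfolding te .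
    then have "(\<lambda>m. a x m * rk (real m * (pi * h / 2))) sums (- (d2 F x h / h^2))"
      using sums_minus by fastforce
    then show ?thesis using sums_unique by fastforce
  qed
  have limF: "((\<lambda>h. d2 F t h / h^2) \<longlongrightarrow> - f t) (at_right 0)" if t: "t \<in> {-1<..<2}" for t
  proof -
    have R: "((\<lambda>\<theta>. \<Sum>m. a t m * rk (real m * \<theta>)) \<longlongrightarrow> f t) (at_right 0)"
      using riemann_lemma(2)[OF summable_sums[OF sumx[OF t]]] unfolding f_def .
    have fl: "filterlim (\<lambda>h::real. pi * h / 2) (at_right 0) (at_right 0)"
    proof (rule tendsto_imp_filterlim_at_right)
      show "((\<lambda>h::real. pi * h / 2) \<longlongrightarrow> 0) (at_right 0)"
        using tendsto_mult[OF tendsto_const[of "pi/2"] tendsto_ident_at[of "0::real" "{0<..}"]] by simp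
      show "\<forall>\<^sub>F h in at_right 0. 0 < pi * h / 2"
        using eventually_at_right_less[of "0::real"] by eventually_elim simp
    qed
    have "((\<lambda>h. \<Sum>m. a t m * rk (real m * (pi * h / 2))) \<longlongrightarrow> f t) (at_right 0)"
      using filterlim_compose[OF R fl] by simp
    then have "((\<lambda>h. - (\<Sum>m. a t m * rk (real m * (pi * h / 2)))) \<longlongrightarrow> - f t) (at_right 0)"
      by (rule tendsto_minus)
    moreover have "\<forall>\<^sub>F h in at_right 0. - (\<Sum>m. a t m * rk (real m * (pi * h / 2))) = d2 F t h / h^2"
      using eventually_at_right_less[of "0::real"] by eventually_elim (simp add: d2eq)
    ultimately show ?thesis by (rule Lim_transform_eventually)
  qed
  obtain N0 where N0: "{x \<in> space lborel. \<not> (x \<in> {0..1} \<longrightarrow> \<bar>k_tau \<tau> x\<bar> \<le> C)} \<subseteq> N0"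
      "emeasure lborel N0 = 0" "N0 \<in> sets lborel"
    using AE_E[OF C] by blast
  have N0n: "N0 \<in> null_sets lborel" using N0 by auto
  define N where "N = N0 \<union> uminus -` N0 \<union> (\<lambda>x. 2 - x) -` N0"
  have Nn: "N \<in> null_sets lborel" unfolding N_def
    by (intro null_sets.Un N0n null_uminus null_refl2)
  have fbnd: "\<bar>f t\<bar> \<le> C" if t: "t \<in> {-1<..<2}" "t \<notin> N" for t
  proof -
    obtain y \<sigma> where y: "y \<in> {0..1}" "\<sigma> = 1 \<or> \<sigma> = -1" "t = y \<or> t = -y \<or> t = 2 - y" "f t = \<sigma> * f y"
      using ext[OF t(1)] by blast
    have "y \<notin> N0" using y(3) t(2) unfolding N_def by auto
    then have "\<bar>k_tau \<tau> y\<bar> \<le> C" using N0(1) y(1) by auto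
    then have "\<bar>f y\<bar> \<le> C" using k01[OF y(1)] unfolding f_def by simp
    then show ?thesis using y(2,4) by (auto simp: abs_mult)
  qed
  have ub1: "d2 F x h \<le> C * h^2" if x: "-1 \<le> x - h" "x + h \<le> 2" "h > 0" for x h
    by (rule upper_bound_d2[of "-1" 2 F "\<lambda>t. - f t" N C x h])
       (use contF limF Nn fbnd x in \<open>auto intro: continuous_on_subset simp: abs_le_iff\<close>)
  have ub2: "- d2 F x h \<le> C * h^2" if x: "-1 \<le> x - h" "x + h \<le> 2" "h > 0" for x h
  proof -
    have e: "d2 (\<lambda>x. - F x) t h = - d2 F t h" for t h by (simp add: d2_def)
    have lim2: "((\<lambda>h. d2 (\<lambda>x. - F x) t h / h^2) \<longlongrightarrow> f t) (at_right 0)" if t: "t \<in> {-1<..<2}" for t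
      using tendsto_minus[OF limF[OF t]] unfolding e by simp
    have "d2 (\<lambda>x. - F x) x h \<le> C * h^2"
      by (rule upper_bound_d2[of "-1" 2 "\<lambda>x. - F x" f N C x h])
         (use contF lim2 Nn fbnd x in \<open>auto intro!: continuous_intros intro: continuous_on_subset simp: abs_le_iff\<close>)
    then show ?thesis unfolding e .
  qed
  have partial: "(\<Sum>m\<in>{1..M}. (c m)^2) \<le> 32 * C^2" for M
  proof (cases "M = 0")
    case True then show ?thesis by simp
  next
    case False
    define h where "h = 1 / (2 * real M)"
    have h0: "h > 0" "h \<le> 1/2" using False by (auto simp: h_def field_simps)
    define \<gamma> where "\<gamma> m = \<beta> m * (-4 * sin (real m * pi * h / 2)^2)" for m
    have sg: "summable (\<lambda>m. \<bar>\<gamma> m\<bar>)"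
    proof (rule summable_comparison_test[OF _ summable_mult[OF sb, of 4]], intro exI allI impI)
      fix n :: nat
      have "sin (real n * pi * h / 2)^2 \<le> 1" by (simp add: abs_square_le_1)
      then have "\<bar>\<beta> n\<bar> * (4 * sin (real n * pi * h / 2)^2) \<le> \<bar>\<beta> n\<bar> * 4"
        by (intro mult_left_mono) auto
      then show "norm (\<bar>\<gamma> n\<bar>) \<le> 4 * \<bar>\<beta> n\<bar>" by (simp add: \<gamma>_def abs_mult mult_ac)
    qed
    have bnd: "\<bar>\<Sum>m. \<gamma> m * sin (real m * pi * x)\<bar> \<le> C * h^2" if x: "x \<in> {0..1}" for x
    proof -
      have "(\<Sum>m. \<gamma> m * sin (real m * pi * x)) = d2 F x h"
        using sums_unique[OF sd2[of h x]] by (simp add: \<gamma>_def)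
      moreover have "d2 F x h \<le> C * h^2" "- d2 F x h \<le> C * h^2"
        using ub1[of x h] ub2[of x h] x h0 by auto
      ultimately show ?thesis by linarith
    qed
    have B: "(\<Sum>m\<in>{1..M}. (\<gamma> m)^2) \<le> 2 * (C * h^2)^2" by (rule bessel[OF sg bnd])
    have low: "(c m)^2 * h^4 / 16 \<le> (\<gamma> m)^2" if m: "m \<in> {1..M}" for m
    proof -
      define y where "y = real m * pi * h / 2"
      have m1: "real m \<ge> 1" "real m \<le> real M" using m by auto
      have y0: "y \<ge> 0" using h0 by (simp add: y_def)
      have "real m * h \<le> 1/2" using m1 False by (simp add: h_def field_simps)
      moreover have "y = (real m * h) * (pi / 2)" by (simp add: y_def algebra_simps)
      ultimately have "y \<le> (1/2) * (pi / 2)" using pi_gt_zero by (metis mult_right_mono less_eq_real_def divide_pos_pos zero_less_numeral)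
      then have "y \<le> pi / 4" by simp
      then have sy: "sin y \<ge> y / 2" using y0 pi_gt_zero by (intro sin_half_lower y0) auto
      have "(y/2)^4 \<le> sin y ^ 4" using sy y0 by (intro power_mono) auto
      then have "(\<beta> m)^2 * 16 * (y/2)^4 \<le> (\<beta> m)^2 * 16 * sin y ^ 4"
        by (intro mult_left_mono) auto
      moreover have "(\<gamma> m)^2 = (\<beta> m)^2 * 16 * sin y ^ 4"
      proof -
        have "(\<gamma> m)^2 = (\<beta> m)^2 * (-4)^2 * (sin y ^ 2)^2"
          unfolding \<gamma>_def y_def by (simp only: power_mult_distrib)
        also have "\<dots> = (\<beta> m)^2 * 16 * sin y ^ 4" by (simp add: power_mult[symmetric])
        finally show ?thesis .
      qed
      moreover have "(\<beta> m)^2 * 16 * (y/2)^4 = (c m)^2 * h^4 / 16"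
        unfolding \<beta>_def y_def using m1 by (simp add: power_mult_distrib power_divide field_simps)
      ultimately show ?thesis by simp
    qed
    have "(\<Sum>m\<in>{1..M}. (c m)^2) * (h^4 / 16) = (\<Sum>m\<in>{1..M}. (c m)^2 * h^4 / 16)"
      by (simp add: sum_distrib_right)
    also have "\<dots> \<le> (\<Sum>m\<in>{1..M}. (\<gamma> m)^2)" by (intro sum_mono low)
    also have "\<dots> \<le> 2 * (C * h^2)^2" by (rule B)
    also have "\<dots> = (32 * C^2) * (h^4 / 16)"
    proof -
      have "(C * h^2)^2 = C^2 * h^4" by (simp add: power_mult_distrib flip: power_mult)
      then show ?thesis by simp
    qed
    finally show ?thesis using h0 by (simp add: mult_le_cancel_right)
  qed
  define u where "u n = (\<tau> (Suc n) / real (Suc n))^2" for n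
  have c2: "(\<tau> m / real m)^2 = pi^2 / 2 * (c m)^2" if "m \<ge> 1" for m
    using that by (simp add: c_def power_mult_distrib power_divide field_simps)
  have su: "summable u"
  proof (rule bounded_imp_summable[of _ "pi^2 / 2 * (32 * C^2)"])
    fix n
    have "(\<Sum>k\<le>n. u k) = (\<Sum>m\<in>{Suc 0..Suc n}. (\<tau> m / real m)^2)"
      unfolding u_def sum.atLeast1_atMost_eq lessThan_Suc_atMost ..
    also have "\<dots> = (\<Sum>m\<in>{1..Suc n}. pi^2 / 2 * (c m)^2)"
    proof (rule sum.cong)
      fix m assume "m \<in> {1..Suc n}"
      then show "(\<tau> m / real m)^2 = pi^2 / 2 * (c m)^2" by (intro c2) simp
    qed simp
    also have "\<dots> = pi^2 / 2 * (\<Sum>m\<in>{1..Suc n}. (c m)^2)" by (rule sum_distrib_left[symmetric])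
    also have "\<dots> \<le> pi^2 / 2 * (32 * C^2)" by (intro mult_left_mono partial) auto
    finally show "(\<Sum>k\<le>n. u k) \<le> pi^2 / 2 * (32 * C^2)" .
  qed (simp add: u_def)
  have tp: "\<tau> (Suc n) > 0" for n using tpos by simp
  have sv: "summable (\<lambda>n. (1 / \<tau> (Suc n))^2)"
  proof -
    have spp: "summable (\<lambda>n. \<bar>1 / \<tau> (Suc n)\<bar> powr p)" using lp unfolding inv_in_lp_def .
    have "\<forall>\<^sub>F n in sequentially. \<bar>1 / \<tau> (Suc n)\<bar> powr p < 1"
      using order_tendstoD(2)[OF summable_LIMSEQ_zero[OF spp], of 1] by simp
    then obtain N where N: "\<And>n. n \<ge> N \<Longrightarrow> \<bar>1 / \<tau> (Suc n)\<bar> powr p < 1"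
      unfolding eventually_sequentially by blast
    show ?thesis
    proof (rule summable_comparison_test[OF _ spp], intro exI[of _ N] allI impI)
      fix n assume n: "n \<ge> N"
      define z where "z = \<bar>1 / \<tau> (Suc n)\<bar>"
      have z0: "z > 0" using tp[of n] by (simp add: z_def)
      have z1: "z \<le> 1"
      proof (rule ccontr)
        assume "\<not> z \<le> 1"
        then have "1 < z powr p" using p by (intro gr_one_powr) auto
        then show False using N[OF n] by (simp add: z_def)
      qed
      have "z powr 2 \<le> z powr p" by (rule powr_mono') (use p z0 z1 in auto)
      moreover have "z powr 2 = (1 / \<tau> (Suc n))^2" using z0 tp[of n] by (simp add: z_def)
      ultimately show "norm ((1 / \<tau> (Suc n))^2) \<le> \<bar>1 / \<tau> (Suc n)\<bar> powr p" by (simp add: z_def)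
    qed
  qed
  have "summable (\<lambda>n. inverse (real (Suc n)))"
  proof (rule summable_comparison_test[OF _ summable_mult[OF summable_add[OF sv su], of "1/2"]], intro exI allI impI)
    fix n :: nat
    define A where "A = 1 / \<tau> (Suc n)"
    define Bq where "Bq = \<tau> (Suc n) / real (Suc n)"
    have "A * Bq = inverse (real (Suc n))" using tp[of n] by (simp add: A_def Bq_def field_simps)
    moreover have "A * Bq \<le> (A^2 + Bq^2) / 2"
    proof -
      have "0 \<le> (A - Bq)^2" by simp
      then show ?thesis by (simp add: power2_eq_square algebra_simps)
    qed
    moreover have "inverse (real (Suc n)) \<ge> 0" by simp
    ultimately show "norm (inverse (real (Suc n))) \<le> 1/2 * ((1 / \<tau> (Suc n))^2 + u n)"
      by (simp add: A_def Bq_def u_def)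
  qed
  then have "summable (\<lambda>n. inverse (real n))" using summable_Suc_iff by blast
  then show False using not_summable_harmonic by blast
qed


theorem proposition4:
  shows "(\<forall>q::real. q > 1 \<longrightarrow>
            pointwise_wd (\<lambda>m. real m powr (1 / q)) \<and>
            (\<forall>p::real. p > q \<longrightarrow> inv_in_lp (\<lambda>m. real m powr (1 / q)) p))
       \<and> (\<forall>(\<tau>::nat \<Rightarrow> real) (p::real).
            (\<forall>m\<ge>1. \<tau> m > 0) \<longrightarrow> 0 < p \<longrightarrow> p \<le> 2 \<longrightarrow> inv_in_lp \<tau> p \<longrightarrow>
            pointwise_wd \<tau> \<longrightarrow> \<not> in_Linf_D (k_tau \<tau>))"
  using part_i part_ii by blast

end
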